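(* Let $\varphi:\mathbb{C}^n\to\mathbb{R}$ be an admissible weight with maximal eigenvalue radius function $\rho$. There is a constant $C$ depending only on $\varphi$ such that for every $z\in\mathbb{C}^n$, every $0<r\le\rho(z)$ and every holomorphic $h:B(z,r)\to\mathbb{C}$, $$|h(z)|^2e^{-2\varphi(z)}\le\frac{C}{|B(z,r)|}\int_{B(z,r)}|h|^2e^{-2\varphi}.$$
   Context: A $C^2$ function $\varphi:\mathbb{C}^n\to\mathbb{R}$ is plurisubharmonic if its complex Hessian $(\partial^2\varphi/\partial z_j\partial\bar z_k)$ is positive semidefinite everywhere. It is admissible if it is $C^2$, plurisubharmonic, and (a) there is $D<\infty$ with $\sup_{B(z,2r)}\Delta\varphi\le D\sup_{B(z,r)}\Delta\varphi$ for all $z\in\mathbb{C}^n$, $r>0$ ($\Delta$ the Euclidean Laplacian on $\mathbb{C}^n\cong\mathbb{R}^{2n}$, $B$ Euclidean balls, $|B|$ Lebesgue measure), and (b) there is $c>0$ with $\inf_{z}\sup_{w\in B(z,c)}\Delta\varphi(w)>0$. Its maximal eigenvalue radius function is $\rho(z)=\sup\{r>0:\sup_{w\in B(z,r)}\Delta\varphi(w)\le r^{-2}\}$. *)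

theory Defs
  imports "HOL-Analysis.Analysis"
begin

text \<open>Points of C^n are modelled as complex ^ 'n for a finite index type 'n
(so n = CARD('n) is arbitrary); this is a euclidean_space of real dimension 2n.\<close>

definition C2 :: "(complex ^ 'n :: finite \<Rightarrow> real) \<Rightarrow> bool" where
  "C2 f \<longleftrightarrow> (\<exists>Df :: complex ^ 'n \<Rightarrow> ((complex ^ 'n) \<Rightarrow>\<^sub>L real).
     \<exists>D2f :: complex ^ 'n \<Rightarrow> ((complex ^ 'n) \<Rightarrow>\<^sub>L ((complex ^ 'n) \<Rightarrow>\<^sub>L real)).
       (\<forall>x. (f has_derivative blinfun_apply (Df x)) (at x)) \<and>
       (\<forall>x. (Df has_derivative blinfun_apply (D2f x)) (at x)) \<and>
       continuous_on UNIV D2f)"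

definition d2 :: "(complex ^ 'n :: finite \<Rightarrow> real) \<Rightarrow> complex ^ 'n \<Rightarrow> complex ^ 'n \<Rightarrow> complex ^ 'n \<Rightarrow> real" where
  "d2 f x u v = deriv (\<lambda>s. deriv (\<lambda>t. f (x + t *\<^sub>R u + s *\<^sub>R v)) 0) 0"

text \<open>Euclidean Laplacian on C^n = R^2n (sum over the standard real basis
x_j = axis j 1, y_j = axis j i).\<close>
definition laplacian :: "(complex ^ 'n :: finite \<Rightarrow> real) \<Rightarrow> complex ^ 'n \<Rightarrow> real" where
  "laplacian f x = (\<Sum>b\<in>Basis. d2 f x b b)"

text \<open>Complex Hessian entry d^2 f / (dz_j d(conj z_k)), with
d/dz_j = (d/dx_j - i d/dy_j)/2 and d/d(conj z_k) = (d/dx_k + i d/dy_k)/2.\<close>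
definition complex_hessian :: "(complex ^ 'n :: finite \<Rightarrow> real) \<Rightarrow> complex ^ 'n \<Rightarrow> 'n \<Rightarrow> 'n \<Rightarrow> complex" where
  "complex_hessian f x j k =
     (let ex = (\<lambda>i. axis i (1::complex)); ey = (\<lambda>i. axis i \<i>) in
      (complex_of_real (d2 f x (ex k) (ex j) + d2 f x (ey k) (ey j))
       + \<i> * complex_of_real (d2 f x (ey k) (ex j) - d2 f x (ex k) (ey j))) / 4)"

definition plurisubharmonic :: "(complex ^ 'n :: finite \<Rightarrow> real) \<Rightarrow> bool" where
  "plurisubharmonic f \<longleftrightarrow> (\<forall>x. \<forall>w :: complex ^ 'n.
     (let q = (\<Sum>j\<in>UNIV. \<Sum>k\<in>UNIV. complex_hessian f x j k * w $ j * cnj (w $ k))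
      in Im q = 0 \<and> 0 \<le> Re q))"

definition admissible :: "(complex ^ 'n :: finite \<Rightarrow> real) \<Rightarrow> bool" where
  "admissible f \<longleftrightarrow> C2 f \<and> plurisubharmonic f \<and>
     (\<exists>D::real. (\<forall>z r. r > 0 \<longrightarrow>
        (SUP w\<in>ball z (2*r). laplacian f w) \<le> D * (SUP w\<in>ball z r. laplacian f w))) \<and>
     (\<exists>c::real. c > 0 \<and> (INF z. SUP w\<in>ball z c. laplacian f w) > 0)"

definition rho :: "(complex ^ 'n :: finite \<Rightarrow> real) \<Rightarrow> complex ^ 'n \<Rightarrow> real" where
  "rho f z = Sup {r. r > 0 \<and> (SUP w\<in>ball z r. laplacian f w) \<le> 1 / r\<^sup>2}"

definition cscale :: "complex \<Rightarrow> complex ^ 'n :: finite \<Rightarrow> complex ^ 'n" where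
  "cscale c v = (\<chi> i. c * v $ i)"

definition holomorphic_n :: "(complex ^ 'n :: finite \<Rightarrow> complex) \<Rightarrow> (complex ^ 'n) set \<Rightarrow> bool" where
  "holomorphic_n h S \<longleftrightarrow> (\<forall>x\<in>S. \<exists>L. (h has_derivative L) (at x) \<and>
      (\<forall>c v. L (cscale c v) = c * L v))"

end

theory Submission
  imports Defs "HOL-Complex_Analysis.Complex_Analysis"
begin

lemma curve_deriv:
  assumes "(f has_real_derivative f') (at t)" "(g has_real_derivative g') (at t)"
  shows "((\<lambda>x. Complex (f x) (g x)) has_vector_derivative Complex f' g') (at t)"
proof -
  have e: "(\<lambda>x. Complex (f x) (g x)) = (\<lambda>x. of_real (f x) + \<i> * of_real (g x))"
    by (auto simp: complex_eq_iff)
  have e2: "Complex f' g' = of_real f' + \<i> * of_real g'" by (simp add: complex_eq_iff)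
  show ?thesis unfolding e e2 using assms
    by (auto intro!: derivative_eq_intros has_vector_derivative_of_real simp: has_vector_derivative_def[symmetric])
qed

lemma chainG:
  assumes "(G has_derivative (\<lambda>w. Re w * a + Im w * b)) (at (\<gamma> t))"
    "(\<gamma> has_vector_derivative d) (at t)"
  shows "((\<lambda>t. G (\<gamma> t)) has_real_derivative (Re d * a + Im d * b)) (at t)"
proof -
  have "((G \<circ> \<gamma>) has_derivative ((\<lambda>w. Re w * a + Im w * b) \<circ> (\<lambda>x. x *\<^sub>R d))) (at t)"
    using assms(2) unfolding has_vector_derivative_def
    by (rule diff_chain_at) (use assms(1) in auto)
  moreover have "((\<lambda>w. Re w * a + Im w * b) \<circ> (\<lambda>x. x *\<^sub>R d)) = (\<lambda>x. (Re d * a + Im d * b) * x)"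
    by (auto simp: algebra_simps)
  ultimately show ?thesis unfolding has_field_derivative_def by (simp add: o_def)
qed

definition C2p :: "complex set \<Rightarrow> (complex\<Rightarrow>real) \<Rightarrow> (complex\<Rightarrow>real) \<Rightarrow> (complex\<Rightarrow>real)
   \<Rightarrow> (complex\<Rightarrow>real) \<Rightarrow> (complex\<Rightarrow>real) \<Rightarrow> (complex\<Rightarrow>real) \<Rightarrow> (complex\<Rightarrow>real) \<Rightarrow> bool" where
"C2p S G Gx Gy Gxx Gxy Gyx Gyy \<longleftrightarrow>
  (\<forall>p\<in>S. (G has_derivative (\<lambda>w. Re w * Gx p + Im w * Gy p)) (at p) \<and>
         (Gx has_derivative (\<lambda>w. Re w * Gxx p + Im w * Gxy p)) (at p) \<and>
         (Gy has_derivative (\<lambda>w. Re w * Gyx p + Im w * Gyy p)) (at p)) \<and>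
  continuous_on S Gxx \<and> continuous_on S Gxy \<and> continuous_on S Gyx \<and> continuous_on S Gyy"

lemma C2p_cont:
  assumes "C2p S G Gx Gy Gxx Gxy Gyx Gyy" "open S"
  shows "continuous_on S G" "continuous_on S Gx" "continuous_on S Gy"
  using assms unfolding C2p_def
  by (meson continuous_at_imp_continuous_on has_derivative_continuous)+

definition "pt t \<theta> = Complex (t * cos \<theta>) (t * sin \<theta>)"

lemma norm_pt: "cmod (pt t \<theta>) = \<bar>t\<bar>"
proof -
  have "(t * cos \<theta>)\<^sup>2 + (t * sin \<theta>)\<^sup>2 = t\<^sup>2"
    by (metis mult.right_neutral power_mult_distrib distrib_left sin_cos_squared_add2)
  thus ?thesis by (simp add: pt_def cmod_def)
qed

lemma pt_0[simp]: "pt 0 \<theta> = 0" and pt_1: "pt 1 \<theta> = cis \<theta>"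
  by (auto simp: pt_def complex_eq_iff)

lemma cont_pt: "continuous_on A (\<lambda>x. pt (fst x) (snd x))"
  unfolding pt_def by (intro continuous_intros)

lemma MV:
  assumes C: "C2p S G Gx Gy Gxx Gxy Gyx Gyy" and S: "open S" "cball 0 1 \<subseteq> S"
    and lap: "\<And>p. p \<in> S \<Longrightarrow> 0 \<le> Gxx p + Gyy p"
  shows "2*pi * G 0 \<le> integral {0..2*pi} (\<lambda>\<theta>. G (cis \<theta>))"
proof -
  note CC = C[unfolded C2p_def]
  have dG: "\<And>p. p \<in> S \<Longrightarrow> (G has_derivative (\<lambda>w. Re w * Gx p + Im w * Gy p)) (at p)"
   and dGx: "\<And>p. p \<in> S \<Longrightarrow> (Gx has_derivative (\<lambda>w. Re w * Gxx p + Im w * Gxy p)) (at p)"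
   and dGy: "\<And>p. p \<in> S \<Longrightarrow> (Gy has_derivative (\<lambda>w. Re w * Gyx p + Im w * Gyy p)) (at p)"
    using CC by auto
  have cG: "continuous_on S G" "continuous_on S Gx" "continuous_on S Gy"
    using C2p_cont[OF C S(1)] by auto
  have cGG: "continuous_on S Gxx" "continuous_on S Gxy" "continuous_on S Gyx" "continuous_on S Gyy"
    using CC by auto
  have inS: "\<And>t \<theta>. \<bar>t\<bar> \<le> 1 \<Longrightarrow> pt t \<theta> \<in> S"
    using S(2) norm_pt by (auto simp: dist_norm)
  define A1 where "A1 t \<theta> = cos \<theta> * Gx (pt t \<theta>) + sin \<theta> * Gy (pt t \<theta>)" for t \<theta>
  define P where "P t \<theta> = A1 t \<theta> + t * (cos \<theta> * (cos \<theta> * Gxx (pt t \<theta>) + sin \<theta> * Gxy (pt t \<theta>))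
        + sin \<theta> * (cos \<theta> * Gyx (pt t \<theta>) + sin \<theta> * Gyy (pt t \<theta>)))" for t \<theta>
  define C1 where "C1 t \<theta> = - t * sin \<theta> * Gx (pt t \<theta>) + t * cos \<theta> * Gy (pt t \<theta>)" for t \<theta>
  define C2 where "C2 t \<theta> = - t * cos \<theta> * Gx (pt t \<theta>) - t * sin \<theta> * Gy (pt t \<theta>)
     + (- t * sin \<theta>) * (- t * sin \<theta> * Gxx (pt t \<theta>) + t * cos \<theta> * Gxy (pt t \<theta>))
     + t * cos \<theta> * (- t * sin \<theta> * Gyx (pt t \<theta>) + t * cos \<theta> * Gyy (pt t \<theta>))" for t \<theta>
  have vt: "((\<lambda>t. pt t \<theta>) has_vector_derivative Complex (cos \<theta>) (sin \<theta>)) (at t)" for t \<theta>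
    unfolding pt_def by (rule curve_deriv) (auto intro!: derivative_eq_intros)
  have vth: "((\<lambda>\<theta>. pt t \<theta>) has_vector_derivative Complex (- t * sin \<theta>) (t * cos \<theta>)) (at \<theta>)" for t \<theta>
    unfolding pt_def by (rule curve_deriv) (auto intro!: derivative_eq_intros)
  have D1: "((\<lambda>t. G (pt t \<theta>)) has_real_derivative A1 t \<theta>) (at t)" if "\<bar>t\<bar> \<le> 1" for t \<theta>
    using chainG[OF dG[OF inS[OF that]] vt] by (simp add: A1_def)
  have D1x: "((\<lambda>t. Gx (pt t \<theta>)) has_real_derivative (cos \<theta> * Gxx (pt t \<theta>) + sin \<theta> * Gxy (pt t \<theta>))) (at t)"
    if "\<bar>t\<bar> \<le> 1" for t \<theta>
    using chainG[OF dGx[OF inS[OF that]] vt] by simp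
  have D1y: "((\<lambda>t. Gy (pt t \<theta>)) has_real_derivative (cos \<theta> * Gyx (pt t \<theta>) + sin \<theta> * Gyy (pt t \<theta>))) (at t)"
    if "\<bar>t\<bar> \<le> 1" for t \<theta>
    using chainG[OF dGy[OF inS[OF that]] vt] by simp
  have D2: "((\<lambda>t. t * A1 t \<theta>) has_real_derivative P t \<theta>) (at t)" if "\<bar>t\<bar> \<le> 1" for t \<theta>
    unfolding A1_def P_def
    by (rule derivative_eq_intros D1x[OF that] D1y[OF that] refl)+ (simp add: algebra_simps)
  have D3: "((\<lambda>\<theta>. G (pt t \<theta>)) has_real_derivative C1 t \<theta>) (at \<theta>)" if "\<bar>t\<bar> \<le> 1" for t \<theta>
    using chainG[OF dG[OF inS[OF that]] vth] by (simp add: C1_def)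
  have D3x: "((\<lambda>\<theta>. Gx (pt t \<theta>)) has_real_derivative (- t * sin \<theta> * Gxx (pt t \<theta>) + t * cos \<theta> * Gxy (pt t \<theta>))) (at \<theta>)"
    if "\<bar>t\<bar> \<le> 1" for t \<theta>
    using chainG[OF dGx[OF inS[OF that]] vth] by simp
  have D3y: "((\<lambda>\<theta>. Gy (pt t \<theta>)) has_real_derivative (- t * sin \<theta> * Gyx (pt t \<theta>) + t * cos \<theta> * Gyy (pt t \<theta>))) (at \<theta>)"
    if "\<bar>t\<bar> \<le> 1" for t \<theta>
    using chainG[OF dGy[OF inS[OF that]] vth] by simp
  have D4: "((\<lambda>\<theta>. C1 t \<theta>) has_real_derivative C2 t \<theta>) (at \<theta>)" if "\<bar>t\<bar> \<le> 1" for t \<theta>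
    unfolding C1_def C2_def
    by (rule derivative_eq_intros D3x[OF that] D3y[OF that] refl)+ (simp add: algebra_simps)
  have F5: "t * P t \<theta> + C2 t \<theta> = t\<^sup>2 * (Gxx (pt t \<theta>) + Gyy (pt t \<theta>))" for t \<theta>
  proof -
    define X where "X = Gxx (pt t \<theta>) + Gyy (pt t \<theta>)"
    have "t * P t \<theta> + C2 t \<theta> = t\<^sup>2 * (sin \<theta>)\<^sup>2 * X + t\<^sup>2 * (cos \<theta>)\<^sup>2 * X"
      unfolding P_def A1_def C2_def X_def by (simp add: algebra_simps power2_eq_square)
    also have "\<dots> = t\<^sup>2 * X" by (simp add: sin_squared_eq algebra_simps)
    finally show ?thesis by (simp add: X_def)
  qed
  have box: "cbox (a::real,b::real) (c,d) = {a..c} \<times> {b..d}" for a b c d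
    by (auto simp: cbox_Pair_eq cbox_interval)
  have ptS: "(\<lambda>x. pt (fst x) (snd x)) ` ({0..1} \<times> {0..2*pi}) \<subseteq> S"
    using inS by auto
  have cA1: "continuous_on ({0..1} \<times> {0..2*pi}) (\<lambda>x. A1 (fst x) (snd x))"
    unfolding A1_def
    by (intro continuous_intros continuous_on_compose2[OF cG(2) cont_pt ptS]
        continuous_on_compose2[OF cG(3) cont_pt ptS])
  have cP: "continuous_on ({0..1} \<times> {0..2*pi}) (\<lambda>x. P (fst x) (snd x))"
    unfolding P_def
    by (intro continuous_intros cA1 continuous_on_compose2[OF cGG(1) cont_pt ptS]
        continuous_on_compose2[OF cGG(2) cont_pt ptS] continuous_on_compose2[OF cGG(3) cont_pt ptS]
        continuous_on_compose2[OF cGG(4) cont_pt ptS])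
  have cC2: "continuous_on ({0..1} \<times> {0..2*pi}) (\<lambda>x. C2 (fst x) (snd x))"
    unfolding C2_def
    by (intro continuous_intros continuous_on_compose2[OF cG(2) cont_pt ptS]
        continuous_on_compose2[OF cG(3) cont_pt ptS] continuous_on_compose2[OF cGG(1) cont_pt ptS]
        continuous_on_compose2[OF cGG(2) cont_pt ptS] continuous_on_compose2[OF cGG(3) cont_pt ptS]
        continuous_on_compose2[OF cGG(4) cont_pt ptS])
  have slice: "continuous_on {0..2*pi} (\<lambda>\<theta>. F t \<theta>)"
    if "continuous_on ({0..1} \<times> {0..2*pi}) (\<lambda>x. F (fst x) (snd x))" "t \<in> {0..1}" for F t
    by (rule continuous_on_compose2[OF that(1), of _ "\<lambda>\<theta>. (t, \<theta>)", simplified])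
       (use that(2) in \<open>auto intro!: continuous_intros\<close>)
  have slice2: "continuous_on {0..1} (\<lambda>t. F t \<theta>)"
    if "continuous_on ({0..1} \<times> {0..2*pi}) (\<lambda>x. F (fst x) (snd x))" "\<theta> \<in> {0..2*pi}" for F \<theta>
    by (rule continuous_on_compose2[OF that(1), of _ "\<lambda>t. (t, \<theta>)", simplified])
       (use that(2) in \<open>auto intro!: continuous_intros\<close>)
  have FTC: "(f' has_integral (f b - f a)) {a..b}"
    if "a \<le> b" "\<And>x. x \<in> {a..b} \<Longrightarrow> (f has_real_derivative f' x) (at x)" for f f' a b
    by (rule fundamental_theorem_of_calculus[OF that(1)])
       (use that(2) in \<open>auto simp: has_real_derivative_iff_has_vector_derivative[symmetric] intro: has_field_derivative_at_within\<close>)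
  have F6: "integral {0..2*pi} (C2 t) = 0" if "t \<in> {0..1}" for t
  proof -
    have "(C2 t has_integral (C1 t (2*pi) - C1 t 0)) {0..2*pi}"
      by (rule FTC) (use D4 that in auto)
    moreover have "C1 t (2*pi) = C1 t 0" by (simp add: C1_def pt_def)
    ultimately show ?thesis by (simp add: integral_unique)
  qed
  have A0: "integral {0..2*pi} (A1 0) = 0"
  proof -
    have "(A1 0 has_integral ((\<lambda>\<theta>. sin \<theta> * Gx 0 - cos \<theta> * Gy 0) (2*pi) - (\<lambda>\<theta>. sin \<theta> * Gx 0 - cos \<theta> * Gy 0) 0)) {0..2*pi}"
      by (rule FTC) (auto intro!: derivative_eq_intros simp: A1_def)
    thus ?thesis by (simp add: integral_unique)
  qed
  have F7: "0 \<le> integral {0..2*pi} (P t)" if "t \<in> {0..1}" for t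
  proof (cases "t = 0")
    case True
    have "P 0 = A1 0" by (auto simp: P_def)
    thus ?thesis using True A0 by simp
  next
    case False
    hence tpos: "t > 0" using that by auto
    have iP: "P t integrable_on {0..2*pi}"
      using slice[OF cP that] integrable_continuous_interval by blast
    have iC: "C2 t integrable_on {0..2*pi}"
      using slice[OF cC2 that] integrable_continuous_interval by blast
    have "0 \<le> integral {0..2*pi} (\<lambda>\<theta>. t * P t \<theta> + C2 t \<theta>)"
    proof (rule integral_nonneg)
      show "(\<lambda>\<theta>. t * P t \<theta> + C2 t \<theta>) integrable_on {0..2*pi}"
        using iP iC by (intro integrable_add integrable_on_mult_right) auto
      fix \<theta> assume "\<theta> \<in> {0..2*pi}"
      have "pt t \<theta> \<in> S" using inS that by auto
      thus "0 \<le> t * P t \<theta> + C2 t \<theta>" unfolding F5 using lap by auto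
    qed
    also have "\<dots> = t * integral {0..2*pi} (P t)"
      using iP iC F6[OF that] by (simp add: integral_add integrable_on_mult_right)
    finally show ?thesis using tpos by (simp add: zero_le_mult_iff)
  qed
  have F8: "0 \<le> integral {0..2*pi} (A1 s)" if "s \<in> {0..1}" for s
  proof (cases "s = 0")
    case True thus ?thesis using A0 by simp
  next
    case False
    hence spos: "s > 0" using that by auto
    have "integral {0..s} (\<lambda>t. P t \<theta>) = s * A1 s \<theta>" if "\<theta> \<in> {0..2*pi}" for \<theta>
    proof -
      have "((\<lambda>t. P t \<theta>) has_integral (s * A1 s \<theta> - 0 * A1 0 \<theta>)) {0..s}"
        by (rule FTC) (use D2 spos \<open>s \<in> {0..1}\<close> in auto)
      thus ?thesis by (simp add: integral_unique)
    qed
    hence "integral {0..2*pi} (\<lambda>\<theta>. s * A1 s \<theta>) = integral {0..2*pi} (\<lambda>\<theta>. integral {0..s} (\<lambda>t. P t \<theta>))"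
      by (intro integral_cong) auto
    also have "\<dots> = integral {0..s} (\<lambda>t. integral {0..2*pi} (\<lambda>\<theta>. P t \<theta>))"
    proof -
      have "continuous_on (cbox (0,0) (s,2*pi)) (\<lambda>(t,\<theta>). P t \<theta>)"
        unfolding box case_prod_unfold
        by (rule continuous_on_subset[OF cP]) (use that in auto)
      from integral_swap_continuous[OF this] show ?thesis by (simp add: box)
    qed
    also have "\<dots> \<ge> 0"
    proof (cases "(\<lambda>t. integral {0..2*pi} (\<lambda>\<theta>. P t \<theta>)) integrable_on {0..s}")
      case True
      thus ?thesis by (rule integral_nonneg) (use F7 that in auto)
    qed (simp add: not_integrable_integral)
    finally show ?thesis using spos by (simp add: zero_le_mult_iff)
  qed
  have cGc: "continuous_on {0..2*pi} (\<lambda>\<theta>. G (cis \<theta>))"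
  proof -
    have "continuous_on {0..2*pi} (\<lambda>\<theta>. G (pt 1 \<theta>))"
      by (rule continuous_on_compose2[OF cG(1)]) (use inS[of 1] in \<open>auto intro!: continuous_intros simp: pt_def\<close>)
    thus ?thesis by (simp add: pt_1)
  qed
  have "integral {0..2*pi} (\<lambda>\<theta>. G (cis \<theta>) - G 0) = integral {0..2*pi} (\<lambda>\<theta>. integral {0..1} (\<lambda>s. A1 s \<theta>))"
  proof (intro integral_cong)
    fix \<theta> assume "\<theta> \<in> {0..2*pi}"
    have "((\<lambda>s. A1 s \<theta>) has_integral (G (pt 1 \<theta>) - G (pt 0 \<theta>))) {0..1}"
      by (rule FTC) (use D1 in auto)
    thus "G (cis \<theta>) - G 0 = integral {0..1} (\<lambda>s. A1 s \<theta>)" by (simp add: integral_unique pt_1)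
  qed
  also have "\<dots> = integral {0..1} (\<lambda>s. integral {0..2*pi} (\<lambda>\<theta>. A1 s \<theta>))"
  proof -
    have "continuous_on (cbox (0,0) (1,2*pi)) (\<lambda>(t,\<theta>). A1 t \<theta>)"
      unfolding box using cA1 by (auto simp: case_prod_unfold)
    from integral_swap_continuous[OF this] show ?thesis by (simp add: box)
  qed
  also have "\<dots> \<ge> 0"
  proof (cases "(\<lambda>s. integral {0..2*pi} (\<lambda>\<theta>. A1 s \<theta>)) integrable_on {0..1}")
    case True
    thus ?thesis by (rule integral_nonneg) (use F8 in auto)
  qed (simp add: not_integrable_integral)
  finally have "0 \<le> integral {0..2*pi} (\<lambda>\<theta>. G (cis \<theta>) - G 0)" .
  also have "\<dots> = integral {0..2*pi} (\<lambda>\<theta>. G (cis \<theta>)) - 2*pi * G 0"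
    using integrable_continuous_interval[OF cGc] by (subst integral_diff) (auto simp: mult.commute)
  finally show ?thesis by simp
qed


lemma C2p_mult:
  assumes N: "C2p S N Nx Ny Nxx Nxy Nyx Nyy" and E: "C2p S E Qx Qy Qxx Qxy Qyx Qyy" and S: "open S"
  shows "C2p S (\<lambda>p. N p * E p) (\<lambda>p. Nx p * E p + N p * Qx p) (\<lambda>p. Ny p * E p + N p * Qy p)
     (\<lambda>p. Nxx p * E p + Nx p * Qx p + Nx p * Qx p + N p * Qxx p)
     (\<lambda>p. Nxy p * E p + Nx p * Qy p + Ny p * Qx p + N p * Qxy p)
     (\<lambda>p. Nyx p * E p + Ny p * Qx p + Nx p * Qy p + N p * Qyx p)
     (\<lambda>p. Nyy p * E p + Ny p * Qy p + Ny p * Qy p + N p * Qyy p)"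
proof -
  note cN = C2p_cont[OF N S] and cE = C2p_cont[OF E S]
  note NN = N[unfolded C2p_def] and EE = E[unfolded C2p_def]
  show ?thesis unfolding C2p_def
  proof (intro conjI ballI)
    fix p assume p: "p \<in> S"
    show "((\<lambda>p. N p * E p) has_derivative (\<lambda>w. Re w * (Nx p * E p + N p * Qx p) + Im w * (Ny p * E p + N p * Qy p))) (at p)"
      using NN EE p by (auto intro!: derivative_eq_intros simp: algebra_simps)
    show "((\<lambda>p. Nx p * E p + N p * Qx p) has_derivative (\<lambda>w. Re w * (Nxx p * E p + Nx p * Qx p + Nx p * Qx p + N p * Qxx p) + Im w * (Nxy p * E p + Nx p * Qy p + Ny p * Qx p + N p * Qxy p))) (at p)"
      using NN EE p by (auto intro!: derivative_eq_intros simp: algebra_simps)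
    show "((\<lambda>p. Ny p * E p + N p * Qy p) has_derivative (\<lambda>w. Re w * (Nyx p * E p + Ny p * Qx p + Nx p * Qy p + N p * Qyx p) + Im w * (Nyy p * E p + Ny p * Qy p + Ny p * Qy p + N p * Qyy p))) (at p)"
      using NN EE p by (auto intro!: derivative_eq_intros simp: algebra_simps)
  qed (use NN EE cN cE in \<open>auto intro!: continuous_intros\<close>)
qed

lemma C2p_exp:
  assumes N: "C2p S s sx sy sxx sxy syx syy" and S: "open S"
  shows "C2p S (\<lambda>p. exp (s p)) (\<lambda>p. exp (s p) * sx p) (\<lambda>p. exp (s p) * sy p)
     (\<lambda>p. exp (s p) * (sx p * sx p + sxx p)) (\<lambda>p. exp (s p) * (sy p * sx p + sxy p))
     (\<lambda>p. exp (s p) * (sx p * sy p + syx p)) (\<lambda>p. exp (s p) * (sy p * sy p + syy p))"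
proof -
  note cN = C2p_cont[OF N S]
  note NN = N[unfolded C2p_def]
  show ?thesis unfolding C2p_def
  proof (intro conjI ballI)
    fix p assume p: "p \<in> S"
    show "((\<lambda>p. exp (s p)) has_derivative (\<lambda>w. Re w * (exp (s p) * sx p) + Im w * (exp (s p) * sy p))) (at p)"
      using NN p by (auto intro!: derivative_eq_intros simp: algebra_simps)
    show "((\<lambda>p. exp (s p) * sx p) has_derivative (\<lambda>w. Re w * (exp (s p) * (sx p * sx p + sxx p)) + Im w * (exp (s p) * (sy p * sx p + sxy p)))) (at p)"
      using NN p by (auto intro!: derivative_eq_intros simp: algebra_simps)
    show "((\<lambda>p. exp (s p) * sy p) has_derivative (\<lambda>w. Re w * (exp (s p) * (sx p * sy p + syx p)) + Im w * (exp (s p) * (sy p * sy p + syy p)))) (at p)"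
      using NN p by (auto intro!: derivative_eq_intros simp: algebra_simps)
  qed (use NN cN in \<open>auto intro!: continuous_intros\<close>)
qed

lemma C2p_lin:
  assumes N: "C2p S N Nx Ny Nxx Nxy Nyx Nyy" and E: "C2p S E Qx Qy Qxx Qxy Qyx Qyy" and S: "open S"
  shows "C2p S (\<lambda>p. a * N p + b * E p) (\<lambda>p. a * Nx p + b * Qx p) (\<lambda>p. a * Ny p + b * Qy p)
     (\<lambda>p. a * Nxx p + b * Qxx p) (\<lambda>p. a * Nxy p + b * Qxy p) (\<lambda>p. a * Nyx p + b * Qyx p) (\<lambda>p. a * Nyy p + b * Qyy p)"
proof -
  note NN = N[unfolded C2p_def] and EE = E[unfolded C2p_def]
  show ?thesis unfolding C2p_def
  proof (intro conjI ballI)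
    fix p assume p: "p \<in> S"
    show "((\<lambda>p. a * N p + b * E p) has_derivative (\<lambda>w. Re w * (a * Nx p + b * Qx p) + Im w * (a * Ny p + b * Qy p))) (at p)"
      using NN EE p by (auto intro!: derivative_eq_intros simp: algebra_simps)
    show "((\<lambda>p. a * Nx p + b * Qx p) has_derivative (\<lambda>w. Re w * (a * Nxx p + b * Qxx p) + Im w * (a * Nxy p + b * Qxy p))) (at p)"
      using NN EE p by (auto intro!: derivative_eq_intros simp: algebra_simps)
    show "((\<lambda>p. a * Ny p + b * Qy p) has_derivative (\<lambda>w. Re w * (a * Nyx p + b * Qyx p) + Im w * (a * Nyy p + b * Qyy p))) (at p)"
      using NN EE p by (auto intro!: derivative_eq_intros simp: algebra_simps)
  qed (use NN EE in \<open>auto intro!: continuous_intros\<close>)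
qed

lemma C2p_normsq:
  "C2p S (\<lambda>p. (cmod p)\<^sup>2) (\<lambda>p. 2 * Re p) (\<lambda>p. 2 * Im p) (\<lambda>_. 2) (\<lambda>_. 0) (\<lambda>_. 0) (\<lambda>_. 2)"
  unfolding C2p_def cmod_power2
  by (auto intro!: derivative_eq_intros continuous_intros simp: algebra_simps)

lemma C2p_holo:
  assumes f: "f holomorphic_on S" and S: "open S"
  defines "f1 \<equiv> deriv f" and "f2 \<equiv> deriv (deriv f)"
  shows "C2p S (\<lambda>p. (cmod (f p))\<^sup>2)
     (\<lambda>p. 2 * (Re (f p) * Re (f1 p) + Im (f p) * Im (f1 p)))
     (\<lambda>p. 2 * (Im (f p) * Re (f1 p) - Re (f p) * Im (f1 p)))
     (\<lambda>p. 2 * ((Re (f1 p))\<^sup>2 + Re (f p) * Re (f2 p) + (Im (f1 p))\<^sup>2 + Im (f p) * Im (f2 p)))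
     (\<lambda>p. 2 * (Im (f p) * Re (f2 p) - Re (f p) * Im (f2 p)))
     (\<lambda>p. 2 * (Im (f p) * Re (f2 p) - Re (f p) * Im (f2 p)))
     (\<lambda>p. 2 * ((Im (f1 p))\<^sup>2 - Re (f p) * Re (f2 p) + (Re (f1 p))\<^sup>2 - Im (f p) * Im (f2 p)))"
proof -
  have h1: "f1 holomorphic_on S" unfolding f1_def using f S by (rule holomorphic_deriv)
  have h2: "f2 holomorphic_on S" unfolding f2_def using h1[unfolded f1_def] S by (rule holomorphic_deriv)
  have d0: "(f has_field_derivative f1 p) (at p)" if "p \<in> S" for p
    unfolding f1_def using f S that by (rule holomorphic_derivI)
  have d1: "(f1 has_field_derivative f2 p) (at p)" if "p \<in> S" for p
    unfolding f2_def f1_def using h1[unfolded f1_def] S that by (rule holomorphic_derivI)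
  have c0: "continuous_on S f" "continuous_on S f1" "continuous_on S f2"
    using f h1 h2 holomorphic_on_imp_continuous_on by blast+
  have dRe: "((\<lambda>x. Re (g x)) has_derivative (\<lambda>w. Re w * Re d - Im w * Im d)) (at p)"
   and dIm: "((\<lambda>x. Im (g x)) has_derivative (\<lambda>w. Re w * Im d + Im w * Re d)) (at p)"
    if "(g has_field_derivative d) (at p)" for g d p
  proof -
    have "(g has_derivative (\<lambda>w. d * w)) (at p)" using that by (simp add: has_field_derivative_def)
    from has_derivative_Re[OF this] has_derivative_Im[OF this]
    show "((\<lambda>x. Re (g x)) has_derivative (\<lambda>w. Re w * Re d - Im w * Im d)) (at p)"
      "((\<lambda>x. Im (g x)) has_derivative (\<lambda>w. Re w * Im d + Im w * Re d)) (at p)"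
      by (simp_all add: algebra_simps)
  qed
  show ?thesis unfolding C2p_def cmod_power2
  proof (intro conjI ballI)
    fix p assume p: "p \<in> S"
    note R0 = dRe[OF d0[OF p]] and I0 = dIm[OF d0[OF p]] and R1 = dRe[OF d1[OF p]] and I1 = dIm[OF d1[OF p]]
    show "((\<lambda>p. (Re (f p))\<^sup>2 + (Im (f p))\<^sup>2) has_derivative (\<lambda>w. Re w * (2 * (Re (f p) * Re (f1 p) + Im (f p) * Im (f1 p))) + Im w * (2 * (Im (f p) * Re (f1 p) - Re (f p) * Im (f1 p))))) (at p)"
      by (rule derivative_eq_intros R0 I0 refl)+ (simp add: algebra_simps power2_eq_square)
    show "((\<lambda>p. 2 * (Re (f p) * Re (f1 p) + Im (f p) * Im (f1 p))) has_derivative (\<lambda>w. Re w * (2 * ((Re (f1 p))\<^sup>2 + Re (f p) * Re (f2 p) + (Im (f1 p))\<^sup>2 + Im (f p) * Im (f2 p))) + Im w * (2 * (Im (f p) * Re (f2 p) - Re (f p) * Im (f2 p))))) (at p)"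
      by (rule derivative_eq_intros R0 I0 R1 I1 refl)+ (simp add: algebra_simps power2_eq_square)
    show "((\<lambda>p. 2 * (Im (f p) * Re (f1 p) - Re (f p) * Im (f1 p))) has_derivative (\<lambda>w. Re w * (2 * (Im (f p) * Re (f2 p) - Re (f p) * Im (f2 p))) + Im w * (2 * ((Im (f1 p))\<^sup>2 - Re (f p) * Re (f2 p) + (Re (f1 p))\<^sup>2 - Im (f p) * Im (f2 p))))) (at p)"
      by (rule derivative_eq_intros R0 I0 R1 I1 refl)+ (simp add: algebra_simps power2_eq_square)
  qed (use c0 in \<open>auto intro!: continuous_intros\<close>)
qed


lemma cscale_decomp: "cscale c v = Re c *\<^sub>R v + Im c *\<^sub>R cscale \<i> v"
  by (simp add: cscale_def vec_eq_iff complex_eq_iff algebra_simps)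

lemma cscale_1[simp]: "cscale 1 v = v"
  by (simp add: cscale_def vec_eq_iff)

lemma cscale_0[simp]: "cscale 0 v = 0" "cscale c 0 = 0"
  by (simp_all add: cscale_def vec_eq_iff)

lemma cscale_mult: "cscale a (cscale b v) = cscale (a*b) v"
  by (simp add: cscale_def vec_eq_iff)

lemma cscale_add: "cscale a (v + w) = cscale a v + cscale a w"
  by (simp add: cscale_def vec_eq_iff algebra_simps)

lemma cscale_diff: "cscale a (v - w) = cscale a v - cscale a w"
  by (simp add: cscale_def vec_eq_iff algebra_simps)

lemma cscale_scaleR: "cscale a (c *\<^sub>R v) = c *\<^sub>R cscale a v"
  by (simp add: cscale_def vec_eq_iff scaleR_conv_of_real algebra_simps)

lemma d2_eq:
  fixes f :: "complex ^ 'n :: finite \<Rightarrow> real"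
  assumes Df: "\<And>x. (f has_derivative blinfun_apply (Df x)) (at x)"
      and D2f: "\<And>x. (Df has_derivative blinfun_apply (D2f x)) (at x)"
  shows "d2 f x u v = blinfun_apply (blinfun_apply (D2f x) v) u"
proof -
  have inner: "deriv (\<lambda>t. f (x + t *\<^sub>R u + s *\<^sub>R v)) 0 = blinfun_apply (Df (x + s *\<^sub>R v)) u" for s
  proof (rule DERIV_imp_deriv)
    have "((\<lambda>t. x + t *\<^sub>R u + s *\<^sub>R v) has_derivative (\<lambda>h. h *\<^sub>R u)) (at 0)"
      by (auto intro!: derivative_eq_intros)
    from diff_chain_at[OF this, of f "blinfun_apply (Df (x + s *\<^sub>R v))"] Df
    have "((\<lambda>t. f (x + t *\<^sub>R u + s *\<^sub>R v)) has_derivative (\<lambda>h. blinfun_apply (Df (x + s *\<^sub>R v)) (h *\<^sub>R u))) (at 0)"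
      by (simp add: o_def)
    thus "((\<lambda>t. f (x + t *\<^sub>R u + s *\<^sub>R v)) has_real_derivative blinfun_apply (Df (x + s *\<^sub>R v)) u) (at 0)"
      unfolding has_field_derivative_def
      by (rule has_derivative_eq_rhs) (simp_all add: fun_eq_iff blinfun.scaleR_right)
  qed
  have "deriv (\<lambda>s. blinfun_apply (Df (x + s *\<^sub>R v)) u) 0 = blinfun_apply (blinfun_apply (D2f x) v) u"
  proof (rule DERIV_imp_deriv)
    have "((\<lambda>s. x + s *\<^sub>R v) has_derivative (\<lambda>h. h *\<^sub>R v)) (at 0)"
      by (auto intro!: derivative_eq_intros)
    from diff_chain_at[OF this, of Df "blinfun_apply (D2f (x + 0 *\<^sub>R v))"] D2f
    have "((\<lambda>s. Df (x + s *\<^sub>R v)) has_derivative (\<lambda>h. blinfun_apply (D2f x) (h *\<^sub>R v))) (at 0)"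
      by (simp add: o_def)
    from bounded_linear.has_derivative[OF blinfun.bounded_linear_left this, of u]
    show "((\<lambda>s. blinfun_apply (Df (x + s *\<^sub>R v)) u) has_real_derivative blinfun_apply (blinfun_apply (D2f x) v) u) (at 0)"
      unfolding has_field_derivative_def
      by (rule has_derivative_eq_rhs) (simp_all add: fun_eq_iff blinfun.scaleR_right blinfun.scaleR_left)
  qed
  thus ?thesis unfolding d2_def inner .
qed

lemma C2p_line:
  fixes f :: "complex ^ 'n :: finite \<Rightarrow> real" and z v :: "complex ^ 'n"
  assumes Df: "\<And>x. (f has_derivative blinfun_apply (Df x)) (at x)"
      and D2f: "\<And>x. (Df has_derivative blinfun_apply (D2f x)) (at x)"
      and cD2: "continuous_on UNIV D2f"
  defines "q \<equiv> (\<lambda>l. z + cscale l v)" and "iv \<equiv> cscale \<i> v"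
  shows "C2p S (\<lambda>l. f (q l)) (\<lambda>l. blinfun_apply (Df (q l)) v) (\<lambda>l. blinfun_apply (Df (q l)) iv)
    (\<lambda>l. blinfun_apply (blinfun_apply (D2f (q l)) v) v) (\<lambda>l. blinfun_apply (blinfun_apply (D2f (q l)) iv) v)
    (\<lambda>l. blinfun_apply (blinfun_apply (D2f (q l)) v) iv) (\<lambda>l. blinfun_apply (blinfun_apply (D2f (q l)) iv) iv)"
proof -
  have qe: "q = (\<lambda>l. z + (Re l *\<^sub>R v + Im l *\<^sub>R iv))"
    unfolding q_def iv_def by (subst cscale_decomp) simp
  have dq: "(q has_derivative (\<lambda>w. Re w *\<^sub>R v + Im w *\<^sub>R iv)) (at l)" for l
    unfolding qe by (auto intro!: derivative_eq_intros)
  have cq: "continuous_on UNIV q" unfolding qe by (intro continuous_intros)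
  have dDf: "((\<lambda>l. Df (q l)) has_derivative (\<lambda>w. blinfun_apply (D2f (q l)) (Re w *\<^sub>R v + Im w *\<^sub>R iv))) (at l)" for l
    using diff_chain_at[OF dq D2f] by (simp add: o_def)
  show ?thesis unfolding C2p_def
  proof (intro conjI ballI)
    fix l assume "l \<in> S"
    have "((\<lambda>l. f (q l)) has_derivative (\<lambda>w. blinfun_apply (Df (q l)) (Re w *\<^sub>R v + Im w *\<^sub>R iv))) (at l)"
      using diff_chain_at[OF dq Df] by (simp add: o_def)
    thus "((\<lambda>l. f (q l)) has_derivative (\<lambda>w. Re w * blinfun_apply (Df (q l)) v + Im w * blinfun_apply (Df (q l)) iv)) (at l)"
      by (simp add: blinfun.add_right blinfun.scaleR_right)
    have "((\<lambda>l. blinfun_apply (Df (q l)) v) has_derivative (\<lambda>w. blinfun_apply (blinfun_apply (D2f (q l)) (Re w *\<^sub>R v + Im w *\<^sub>R iv)) v)) (at l)"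
      by (rule bounded_linear.has_derivative[OF blinfun.bounded_linear_left dDf])
    thus "((\<lambda>l. blinfun_apply (Df (q l)) v) has_derivative (\<lambda>w. Re w * blinfun_apply (blinfun_apply (D2f (q l)) v) v + Im w * blinfun_apply (blinfun_apply (D2f (q l)) iv) v)) (at l)"
      by (simp add: blinfun.add_right blinfun.scaleR_right blinfun.add_left blinfun.scaleR_left)
    have "((\<lambda>l. blinfun_apply (Df (q l)) iv) has_derivative (\<lambda>w. blinfun_apply (blinfun_apply (D2f (q l)) (Re w *\<^sub>R v + Im w *\<^sub>R iv)) iv)) (at l)"
      by (rule bounded_linear.has_derivative[OF blinfun.bounded_linear_left dDf])
    thus "((\<lambda>l. blinfun_apply (Df (q l)) iv) has_derivative (\<lambda>w. Re w * blinfun_apply (blinfun_apply (D2f (q l)) v) iv + Im w * blinfun_apply (blinfun_apply (D2f (q l)) iv) iv)) (at l)"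
      by (simp add: blinfun.add_right blinfun.scaleR_right blinfun.add_left blinfun.scaleR_left)
  qed (auto intro!: continuous_intros continuous_on_compose2[OF cD2 continuous_on_subset[OF cq]])
qed



lemma sum_Basis_cvec:
  "(\<Sum>b\<in>(Basis::(complex^'n::finite) set). F b) = (\<Sum>j\<in>UNIV. F (axis j 1) + F (axis j \<i>))"
proof -
  have e: "(Basis::(complex^'n) set) = (\<lambda>(j,u). axis j u) ` (UNIV \<times> {1, \<i>})"
    by (auto simp: Basis_vec_def Basis_complex_def)
  have i: "inj_on (\<lambda>(j,u). axis j u) (UNIV \<times> {1::complex, \<i>})"
    by (auto simp: inj_on_def axis_eq_axis)
  have "(\<Sum>b\<in>(Basis::(complex^'n) set). F b) = (\<Sum>x\<in>UNIV \<times> {1, \<i>}. F ((\<lambda>(j,u). axis j u) x))"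
    unfolding e by (rule sum.reindex[OF i, unfolded o_def])
  also have "\<dots> = (\<Sum>j\<in>UNIV. \<Sum>u\<in>{1,\<i>}. F (axis j u))"
    unfolding sum.cartesian_product by (simp add: case_prod_unfold)
  also have "\<dots> = (\<Sum>j\<in>UNIV. F (axis j 1) + F (axis j \<i>))"
    by simp
  finally show ?thesis .
qed

lemma vec_decomp:
  fixes w :: "complex ^ 'n::finite"
  shows "w = (\<Sum>j\<in>UNIV. Re (w$j) *\<^sub>R axis j 1 + Im (w$j) *\<^sub>R axis j \<i>)"
proof (subst vec_eq_iff, intro allI)
  fix i
  have "(\<Sum>j\<in>UNIV. Re (w$j) *\<^sub>R axis j (1::complex) + Im (w$j) *\<^sub>R axis j \<i>) $ i
      = (\<Sum>j\<in>UNIV. (Re (w$j) *\<^sub>R axis j (1::complex) + Im (w$j) *\<^sub>R axis j \<i>) $ i)"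
    by (rule sum_component)
  also have "\<dots> = (\<Sum>j\<in>UNIV. if j = i then Re (w$j) *\<^sub>R 1 + Im (w$j) *\<^sub>R \<i> else 0)"
    by (intro sum.cong) (auto simp: axis_def)
  also have "\<dots> = w $ i" by (simp add: complex_eq_iff)
  finally show "w $ i = (\<Sum>j\<in>UNIV. Re (w$j) *\<^sub>R axis j 1 + Im (w$j) *\<^sub>R axis j \<i>) $ i" by simp
qed

lemma cscale_i_axis: "cscale \<i> (axis j 1) = axis j \<i>" "cscale \<i> (axis j \<i>) = - axis j 1"
  by (auto simp: cscale_def vec_eq_iff axis_def)


lemma bil_expand:
  fixes M :: "(complex^'n::finite) \<Rightarrow>\<^sub>L (complex^'n) \<Rightarrow>\<^sub>L real"
  shows "blinfun_apply (blinfun_apply M (\<Sum>j\<in>UNIV. a j *\<^sub>R axis j 1 + b j *\<^sub>R axis j \<i>))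
            (\<Sum>k\<in>UNIV. c k *\<^sub>R axis k 1 + d k *\<^sub>R axis k \<i>)
   = (\<Sum>j\<in>UNIV. \<Sum>k\<in>UNIV. a j * c k * blinfun_apply (blinfun_apply M (axis j 1)) (axis k 1)
        + a j * d k * blinfun_apply (blinfun_apply M (axis j 1)) (axis k \<i>)
        + b j * c k * blinfun_apply (blinfun_apply M (axis j \<i>)) (axis k 1)
        + b j * d k * blinfun_apply (blinfun_apply M (axis j \<i>)) (axis k \<i>))"
proof -
  have "blinfun_apply (blinfun_apply M (\<Sum>j\<in>UNIV. a j *\<^sub>R axis j 1 + b j *\<^sub>R axis j \<i>))
            (\<Sum>k\<in>UNIV. c k *\<^sub>R axis k 1 + d k *\<^sub>R axis k \<i>)
     = (\<Sum>j\<in>UNIV. \<Sum>k\<in>UNIV. blinfun_apply (blinfun_apply M (a j *\<^sub>R axis j 1 + b j *\<^sub>R axis j \<i>))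
            (c k *\<^sub>R axis k 1 + d k *\<^sub>R axis k \<i>))"
    by (simp only: blinfun.sum_left blinfun.sum_right) (rule sum.swap)
  also have "\<dots> = (\<Sum>j\<in>UNIV. \<Sum>k\<in>UNIV. a j * c k * blinfun_apply (blinfun_apply M (axis j 1)) (axis k 1)
        + a j * d k * blinfun_apply (blinfun_apply M (axis j 1)) (axis k \<i>)
        + b j * c k * blinfun_apply (blinfun_apply M (axis j \<i>)) (axis k 1)
        + b j * d k * blinfun_apply (blinfun_apply M (axis j \<i>)) (axis k \<i>))"
    by (intro sum.cong refl)
       (simp add: blinfun.add_left blinfun.add_right blinfun.scaleR_left blinfun.scaleR_right algebra_simps)
  finally show ?thesis .
qed

lemma re_herm: "Re ((complex_of_real \<alpha> + \<i> * complex_of_real \<beta>) / 4 * x * cnj y)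
   = (\<alpha> * (Re x * Re y + Im x * Im y) - \<beta> * (Im x * Re y - Re x * Im y)) / 4"
  by (simp add: algebra_simps)

lemma alg4: "(a1 * b1 * p1 + a1 * b2 * p2 + a2 * b1 * p3 + a2 * b2 * p4) + ((- a2) * (- b2) * p1 + (- a2) * b1 * p2 + a1 * (- b2) * p3 + a1 * b1 * p4)
   = 4 * (((p1 + p4) * (a1 * b1 + a2 * b2) - (p2 - p3) * (a2 * b1 - a1 * b2)) / 4)" for a1 a2 b1 b2 p1 p2 p3 p4 :: real
  by (simp add: algebra_simps)

lemma hess_form:
  fixes f :: "complex ^ 'n :: finite \<Rightarrow> real" and M :: "(complex^'n) \<Rightarrow>\<^sub>L (complex^'n) \<Rightarrow>\<^sub>L real"
  assumes d2: "\<And>u v. d2 f x u v = blinfun_apply (blinfun_apply M v) u"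
  shows "Re (\<Sum>j\<in>UNIV. \<Sum>k\<in>UNIV. complex_hessian f x j k * w $ j * cnj (w $ k))
     = (blinfun_apply (blinfun_apply M w) w + blinfun_apply (blinfun_apply M (cscale \<i> w)) (cscale \<i> w)) / 4"
proof -
  define B where "B a b = blinfun_apply (blinfun_apply M a) b" for a b
  have iw: "cscale \<i> w = (\<Sum>j\<in>UNIV. (- Im (w$j)) *\<^sub>R axis j 1 + Re (w$j) *\<^sub>R axis j \<i>)"
    by (subst vec_decomp) (simp add: cscale_def vec_eq_iff complex_eq_iff)
  define X where "X j k = Re (w$j) * Re (w$k) * B (axis j 1) (axis k 1)
        + Re (w$j) * Im (w$k) * B (axis j 1) (axis k \<i>)
        + Im (w$j) * Re (w$k) * B (axis j \<i>) (axis k 1)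
        + Im (w$j) * Im (w$k) * B (axis j \<i>) (axis k \<i>)" for j k
  define Y where "Y j k = (- Im (w$j)) * (- Im (w$k)) * B (axis j 1) (axis k 1)
        + (- Im (w$j)) * Re (w$k) * B (axis j 1) (axis k \<i>)
        + Re (w$j) * (- Im (w$k)) * B (axis j \<i>) (axis k 1)
        + Re (w$j) * Re (w$k) * B (axis j \<i>) (axis k \<i>)" for j k
  have e1: "B w w = (\<Sum>j\<in>UNIV. \<Sum>k\<in>UNIV. X j k)"
    unfolding B_def X_def by (subst (1 2) vec_decomp) (rule bil_expand)
  have e2: "B (cscale \<i> w) (cscale \<i> w) = (\<Sum>j\<in>UNIV. \<Sum>k\<in>UNIV. Y j k)"
    unfolding B_def Y_def iw by (rule bil_expand)
  have tm: "Re (complex_hessian f x j k * w $ j * cnj (w $ k)) = (X j k + Y j k) / 4" for j k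
  proof -
    have "complex_hessian f x j k = (complex_of_real (B (axis j 1) (axis k 1) + B (axis j \<i>) (axis k \<i>))
        + \<i> * complex_of_real (B (axis j 1) (axis k \<i>) - B (axis j \<i>) (axis k 1))) / 4"
      by (simp add: complex_hessian_def Let_def d2 B_def)
    hence "Re (complex_hessian f x j k * w $ j * cnj (w $ k)) =
       ((B (axis j 1) (axis k 1) + B (axis j \<i>) (axis k \<i>)) * (Re (w$j) * Re (w$k) + Im (w$j) * Im (w$k))
        - (B (axis j 1) (axis k \<i>) - B (axis j \<i>) (axis k 1)) * (Im (w$j) * Re (w$k) - Re (w$j) * Im (w$k))) / 4"
      by (simp only: re_herm)
    also have "\<dots> = (X j k + Y j k) / 4"
      unfolding X_def Y_def by (subst alg4) simp
    finally show ?thesis .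
  qed
  have "Re (\<Sum>j\<in>UNIV. \<Sum>k\<in>UNIV. complex_hessian f x j k * w $ j * cnj (w $ k))
     = (\<Sum>j\<in>UNIV. \<Sum>k\<in>UNIV. (X j k + Y j k) / 4)"
    by (simp only: Re_sum tm)
  also have "\<dots> = ((\<Sum>j\<in>UNIV. \<Sum>k\<in>UNIV. X j k) + (\<Sum>j\<in>UNIV. \<Sum>k\<in>UNIV. Y j k)) / 4"
    by (simp only: sum_divide_distrib[symmetric] sum.distrib add_divide_distrib)
  finally show ?thesis unfolding e1[symmetric] e2[symmetric] by (simp add: B_def)
qed


lemma bil_CS:
  fixes S :: "'a::real_vector \<Rightarrow> 'a \<Rightarrow> real"
  assumes bl: "bilinear S" and sym: "\<And>x y. S x y = S y x" and pos: "\<And>x. 0 \<le> S x x"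
  shows "(S x y)\<^sup>2 \<le> S x x * S y y"
proof -
  have l1: "linear (\<lambda>a. S a b)" and l2: "linear (\<lambda>b. S a b)" for a b
    using bl by (auto simp: bilinear_def)
  have exp: "S (x + t *\<^sub>R y) (x + t *\<^sub>R y) = S x x + 2 * t * S x y + t\<^sup>2 * S y y" for t
  proof -
    have "S (x + t *\<^sub>R y) (x + t *\<^sub>R y) = S x (x + t *\<^sub>R y) + t * S y (x + t *\<^sub>R y)"
      using linear_add[OF l1] linear_scale[OF l1] by simp
    also have "\<dots> = S x x + t * S x y + t * (S y x + t * S y y)"
      using linear_add[OF l2] linear_scale[OF l2] by simp
    finally show ?thesis using sym[of y x] by (simp add: algebra_simps power2_eq_square)
  qed
  show ?thesis
  proof (cases "S y y = 0")
    case True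
    have "S x y = 0"
    proof (rule ccontr)
      assume ne: "S x y \<noteq> 0"
      define t where "t = - (S x x + 1) / (2 * S x y)"
      have "0 \<le> S x x + 2 * t * S x y + t\<^sup>2 * S y y" using pos exp by metis
      also have "\<dots> = -1" using ne True by (simp add: t_def field_simps)
      finally show False by simp
    qed
    thus ?thesis using True by simp
  next
    case False
    hence yy: "S y y > 0" using pos[of y] by simp
    define t where "t = - S x y / S y y"
    have "0 \<le> S x x + 2 * t * S x y + t\<^sup>2 * S y y" using pos exp by metis
    also have "\<dots> = S x x - (S x y)\<^sup>2 / S y y" using yy by (simp add: t_def field_simps power2_eq_square)
    finally show ?thesis using yy by (simp add: field_simps)
  qed
qed

lemma psd_bound:
  fixes S :: "'a::euclidean_space \<Rightarrow> 'a \<Rightarrow> real"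
  assumes bl: "bilinear S" and sym: "\<And>x y. S x y = S y x" and pos: "\<And>x. 0 \<le> S x x"
  shows "S v v \<le> (real DIM('a))\<^sup>2 * (norm v)\<^sup>2 * (\<Sum>b\<in>Basis. S b b)"
proof -
  define T where "T = (\<Sum>b\<in>Basis. S b b)"
  define m where "m = real DIM('a)"
  have T0: "0 \<le> T" unfolding T_def by (intro sum_nonneg pos)
  have bT: "S b b \<le> T" if "b \<in> Basis" for b
    unfolding T_def by (rule member_le_sum[OF that]) (auto intro: pos)
  have l1: "linear (\<lambda>a. S a v)" using bl by (auto simp: bilinear_def)
  have "S v v = S (\<Sum>b\<in>Basis. (v \<bullet> b) *\<^sub>R b) v" by (simp add: euclidean_representation)
  also have "\<dots> = (\<Sum>b\<in>Basis. (v \<bullet> b) * S b v)"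
    using linear_sum[OF l1, of "\<lambda>b. (v \<bullet> b) *\<^sub>R b" Basis] linear_scale[OF l1] by simp
  also have "\<dots> \<le> (\<Sum>b\<in>(Basis::'a set). norm v * (sqrt T * sqrt (S v v)))"
  proof (rule sum_mono)
    fix b :: 'a assume b: "b \<in> Basis"
    have "\<bar>S b v\<bar> \<le> sqrt (S b b * S v v)"
      using bil_CS[OF bl sym pos, of b v] by (simp add: real_le_rsqrt)
    also have "\<dots> \<le> sqrt (T * S v v)"
      using bT[OF b] pos[of v] by (intro real_sqrt_le_mono mult_right_mono) auto
    finally have 1: "\<bar>S b v\<bar> \<le> sqrt T * sqrt (S v v)" by (simp add: real_sqrt_mult)
    have 2: "\<bar>v \<bullet> b\<bar> \<le> norm v" using Basis_le_norm[OF b] by simp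
    have "(v \<bullet> b) * S b v \<le> \<bar>v \<bullet> b\<bar> * \<bar>S b v\<bar>" by (simp add: abs_mult[symmetric])
    also have "\<dots> \<le> norm v * (sqrt T * sqrt (S v v))"
      using 1 2 by (intro mult_mono) auto
    finally show "(v \<bullet> b) * S b v \<le> norm v * (sqrt T * sqrt (S v v))" .
  qed
  also have "\<dots> = m * norm v * sqrt T * sqrt (S v v)" by (simp add: m_def)
  finally have A: "S v v \<le> m * norm v * sqrt T * sqrt (S v v)" .
  have "sqrt (S v v) \<le> m * norm v * sqrt T"
  proof (cases "S v v = 0")
    case True thus ?thesis using T0 by (simp add: m_def)
  next
    case False
    hence p: "sqrt (S v v) > 0" using pos[of v] by simp
    have "sqrt (S v v) * sqrt (S v v) \<le> (m * norm v * sqrt T) * sqrt (S v v)"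
      using A pos[of v] by (simp add: mult_ac)
    from mult_right_le_imp_le[OF this p] show ?thesis .
  qed
  hence "(sqrt (S v v))\<^sup>2 \<le> (m * norm v * sqrt T)\<^sup>2"
    by (intro power_mono) (auto intro: pos)
  thus ?thesis using pos[of v] T0 by (simp add: T_def m_def power_mult_distrib)
qed


lemma Q_bound:
  fixes \<phi> :: "complex ^ 'n :: finite \<Rightarrow> real" and M :: "(complex^'n) \<Rightarrow>\<^sub>L (complex^'n) \<Rightarrow>\<^sub>L real"
  assumes psh: "plurisubharmonic \<phi>" and d2: "\<And>u v. d2 \<phi> x u v = blinfun_apply (blinfun_apply M v) u"
  shows "blinfun_apply (blinfun_apply M v) v + blinfun_apply (blinfun_apply M (cscale \<i> v)) (cscale \<i> v)
     \<le> 2 * (real DIM(complex^'n))\<^sup>2 * (norm v)\<^sup>2 * laplacian \<phi> x"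
proof -
  define B where "B a b = blinfun_apply (blinfun_apply M a) b" for a b
  define J where "J a = cscale \<i> a" for a :: "complex^'n"
  define S where "S a b = B a b + B b a + B (J a) (J b) + B (J b) (J a)" for a b
  have Bl: "B (a + a') b = B a b + B a' b" "B a (b + b') = B a b + B a b'"
     "B (c *\<^sub>R a) b = c * B a b" "B a (c *\<^sub>R b) = c * B a b" for a a' b b' c
    by (simp_all add: B_def blinfun.add_left blinfun.add_right blinfun.scaleR_left blinfun.scaleR_right)
  have Jl: "J (a + b) = J a + J b" "J (c *\<^sub>R a) = c *\<^sub>R J a" for a b c
    by (simp_all add: J_def cscale_add cscale_scaleR)
  have bl: "bilinear S"
    unfolding bilinear_def linear_iff S_def by (simp add: Bl Jl algebra_simps)
  have sym: "S a b = S b a" for a b unfolding S_def by simp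
  have pos: "0 \<le> S a a" for a
  proof -
    have "0 \<le> Re (\<Sum>j\<in>UNIV. \<Sum>k\<in>UNIV. complex_hessian \<phi> x j k * a $ j * cnj (a $ k))"
      using psh unfolding plurisubharmonic_def Let_def by blast
    also have "\<dots> = (B a a + B (J a) (J a)) / 4"
      unfolding hess_form[of \<phi> x M, OF d2] B_def J_def ..
    finally show ?thesis unfolding S_def by simp
  qed
  have Jax: "J (axis j 1) = axis j \<i>" "J (axis j \<i>) = - axis j 1" for j
    by (simp_all add: J_def cscale_i_axis)
  have Bneg: "B (- a) (- a) = B a a" for a
    using Bl(3)[of "-1" a] Bl(4)[of a "-1"] by simp
  have trS: "(\<Sum>b\<in>Basis. S b b) = 4 * (\<Sum>b\<in>Basis. B b b)"
    unfolding sum_Basis_cvec S_def by (simp add: Jax Bneg sum_distrib_left algebra_simps sum.distrib)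
  have lap: "laplacian \<phi> x = (\<Sum>b\<in>Basis. B b b)"
    unfolding laplacian_def d2 B_def ..
  have "S v v \<le> (real DIM(complex^'n))\<^sup>2 * (norm v)\<^sup>2 * (\<Sum>b\<in>Basis. S b b)"
    by (rule psd_bound[OF bl sym pos])
  hence "S v v \<le> (real DIM(complex^'n))\<^sup>2 * (norm v)\<^sup>2 * (4 * laplacian \<phi> x)"
    by (simp only: trS lap)
  moreover have "S v v = 2 * (B v v + B (J v) (J v))" by (simp add: S_def)
  ultimately have "B v v + B (J v) (J v) \<le> 2 * (real DIM(complex^'n))\<^sup>2 * (norm v)\<^sup>2 * laplacian \<phi> x"
    by (simp add: algebra_simps)
  thus ?thesis by (simp add: B_def J_def)
qed


lemma C2_lap:
  fixes \<phi> :: "complex ^ 'n :: finite \<Rightarrow> real"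
  assumes "C2 \<phi>"
  shows "continuous_on UNIV (laplacian \<phi>)"
proof -
  obtain Df D2f where Df: "\<And>x. (\<phi> has_derivative blinfun_apply (Df x)) (at x)"
    and D2f: "\<And>x. (Df has_derivative blinfun_apply (D2f x)) (at x)" and cD: "continuous_on UNIV D2f"
    using assms unfolding C2_def by blast
  have "laplacian \<phi> = (\<lambda>x. \<Sum>b\<in>Basis. blinfun_apply (blinfun_apply (D2f x) b) b)"
    by (rule ext) (simp add: laplacian_def d2_eq[OF Df D2f])
  thus ?thesis by (auto intro!: continuous_intros cD)
qed

lemma lap_bound:
  fixes \<phi> :: "complex ^ 'n :: finite \<Rightarrow> real"
  assumes C: "C2 \<phi>" and r: "0 < r" "r \<le> rho \<phi> z" and p: "p \<in> ball z r"
  shows "laplacian \<phi> p \<le> 1 / r\<^sup>2"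
proof (rule ccontr)
  define L where "L = laplacian \<phi>"
  have cL: "continuous_on UNIV L" using C2_lap[OF C] by (simp add: L_def)
  have bdd: "bdd_above (L ` ball z R)" for R
  proof -
    have "compact (L ` cball z R)"
      by (rule compact_continuous_image[OF continuous_on_subset[OF cL]]) auto
    hence "bdd_above (L ` cball z R)" by (simp add: bounded_imp_bdd_above compact_imp_bounded)
    thus ?thesis by (rule bdd_above_mono) auto
  qed
  define Sr where "Sr = {r. r > 0 \<and> (SUP w\<in>ball z r. L w) \<le> 1 / r\<^sup>2}"
  have rho: "rho \<phi> z = Sup Sr" by (simp add: rho_def Sr_def L_def)
  have ne: "Sr \<noteq> {}"
  proof -
    obtain M where M: "\<And>w. w \<in> ball z 1 \<Longrightarrow> L w \<le> M" using bdd[of 1] unfolding bdd_above_def by blast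
    define M' where "M' = max M 0"
    define r0 where "r0 = 1 / (M' + 1)"
    have r0: "0 < r0" "r0 \<le> 1" unfolding r0_def M'_def by auto
    have "(SUP w\<in>ball z r0. L w) \<le> M'"
      using r0 M by (intro cSUP_least) (auto simp: M'_def le_max_iff_disj)
    also have "M' \<le> 1 / r0\<^sup>2"
    proof -
      have "M' \<ge> 0" by (simp add: M'_def)
      hence "M' \<le> (M' + 1)\<^sup>2" by (simp add: power2_eq_square algebra_simps)
      thus ?thesis by (simp add: r0_def power_divide)
    qed
    finally show ?thesis using r0 unfolding Sr_def by auto
  qed
  assume "\<not> laplacian \<phi> p \<le> 1 / r\<^sup>2"
  hence Lp: "L p > 1 / r\<^sup>2" by (simp add: L_def)
  have Lpos: "L p > 0" using Lp r by (smt (verit) divide_pos_pos zero_less_power)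
  define d where "d = dist z p"
  have d: "d < r" using p by (simp add: d_def)
  have sq: "1 / sqrt (L p) < r"
  proof -
    have "1 / r\<^sup>2 < L p" by (rule Lp)
    hence "sqrt (1 / r\<^sup>2) < sqrt (L p)" by simp
    hence "1 / r < sqrt (L p)" using r by (simp add: real_sqrt_divide)
    thus ?thesis using r Lpos by (simp add: field_simps)
  qed
  define a where "a = max d (1 / sqrt (L p))"
  have a: "a < r" using d sq by (simp add: a_def)
  define r2 where "r2 = (a + r) / 2"
  have r2: "a < r2" "r2 < r" using a by (auto simp: r2_def)
  have "r2 < Sup Sr" using r2 r rho by simp
  then obtain r' where r': "r' \<in> Sr" "r2 < r'"
  proof (cases "bdd_above Sr")
    case True
    thus ?thesis using that \<open>r2 < Sup Sr\<close> less_cSup_iff[OF ne True] by blast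
  next
    case False
    thus ?thesis using that unfolding bdd_above_def by (meson not_le)
  qed
  have r'pos: "r' > 0" using r' by (simp add: Sr_def)
  have "p \<in> ball z r'" using r2 r' a by (simp add: a_def d_def)
  hence "L p \<le> (SUP w\<in>ball z r'. L w)" by (rule cSUP_upper[OF _ bdd])
  also have "\<dots> \<le> 1 / r'\<^sup>2" using r' by (simp add: Sr_def)
  finally have 1: "L p \<le> 1 / r'\<^sup>2" .
  have "1 / sqrt (L p) < r'" using r2 r' by (simp add: a_def)
  hence "1 < r' * sqrt (L p)" using Lpos by (simp add: field_simps)
  hence "1 < (r' * sqrt (L p))\<^sup>2" by (simp add: one_less_power)
  hence "1 < r'\<^sup>2 * L p" using Lpos by (simp add: power_mult_distrib)
  hence "1 / r'\<^sup>2 < L p" using r'pos by (simp add: field_simps)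
  with 1 show False by simp
qed


lemma inner_cscale: "cscale l a \<bullet> cscale l b = (cmod l)\<^sup>2 * (a \<bullet> b)"
  unfolding cscale_def inner_vec_def inner_complex_def sum_distrib_left cmod_power2
  by (intro sum.cong refl) (simp add: algebra_simps power2_eq_square)

lemma norm_cscale: "norm (cscale l v) = cmod l * norm v"
proof -
  have "norm (cscale l v) = sqrt ((cmod l)\<^sup>2 * (v \<bullet> v))" by (simp add: norm_eq_sqrt_inner inner_cscale)
  also have "\<dots> = cmod l * norm v" by (simp add: real_sqrt_mult norm_eq_sqrt_inner)
  finally show ?thesis .
qed

lemma lap_pos_alg:
  fixes E N A B a1 b1 a2 b2 sx sy sxx syy :: real
  assumes "0 \<le> E" "0 \<le> sxx + syy" "N = A\<^sup>2 + B\<^sup>2"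
  shows "0 \<le> (2 * (a1\<^sup>2 + A * a2 + b1\<^sup>2 + B * b2) * E + 2 * (A * a1 + B * b1) * (E * sx)
      + 2 * (A * a1 + B * b1) * (E * sx) + N * (E * (sx * sx + sxx)))
    + (2 * (b1\<^sup>2 - A * a2 + a1\<^sup>2 - B * b2) * E + 2 * (B * a1 - A * b1) * (E * sy)
      + 2 * (B * a1 - A * b1) * (E * sy) + N * (E * (sy * sy + syy)))"
proof -
  have "(2 * (a1\<^sup>2 + A * a2 + b1\<^sup>2 + B * b2) * E + 2 * (A * a1 + B * b1) * (E * sx)
      + 2 * (A * a1 + B * b1) * (E * sx) + N * (E * (sx * sx + sxx)))
    + (2 * (b1\<^sup>2 - A * a2 + a1\<^sup>2 - B * b2) * E + 2 * (B * a1 - A * b1) * (E * sy)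
      + 2 * (B * a1 - A * b1) * (E * sy) + N * (E * (sy * sy + syy)))
    = E * ((2 * a1 + A * sx + B * sy)\<^sup>2 + (2 * b1 + B * sx - A * sy)\<^sup>2 + N * (sxx + syy))"
    using assms(3) by (simp add: algebra_simps power2_eq_square)
  also have "\<dots> \<ge> 0"
  proof -
    have n0: "0 \<le> N * (sxx + syy)" using assms by (simp add: mult_nonneg_nonneg)
    have "0 \<le> (2 * a1 + A * sx + B * sy)\<^sup>2 + (2 * b1 + B * sx - A * sy)\<^sup>2 + N * (sxx + syy)"
      using n0 by simp
    thus ?thesis using assms(1) by simp
  qed
  finally show ?thesis .
qed

lemma circle_ineq:
  fixes \<phi> :: "complex^'n::finite \<Rightarrow> real" and h :: "complex^'n \<Rightarrow> complex" and z v :: "complex^'n"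
  assumes C: "C2 \<phi>" and psh: "plurisubharmonic \<phi>" and r: "0 < r" "r \<le> rho \<phi> z"
    and hol: "holomorphic_n h (ball z r)" and v: "norm v < r"
  defines "K \<equiv> (real DIM(complex^'n))\<^sup>2"
  shows "2*pi * ((cmod (h z))\<^sup>2 * exp (- 2 * \<phi> z)) \<le> exp K *
    integral {0..2*pi} (\<lambda>\<theta>. (cmod (h (z + cscale (cis \<theta>) v)))\<^sup>2 * exp (- 2 * \<phi> (z + cscale (cis \<theta>) v)))"
proof -
  obtain Df D2f where Df: "\<And>x. (\<phi> has_derivative blinfun_apply (Df x)) (at x)"
    and D2f: "\<And>x. (Df has_derivative blinfun_apply (D2f x)) (at x)" and cD: "continuous_on UNIV D2f"
    using C unfolding C2_def by blast
  define q where "q l = z + cscale l v" for l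
  define S where "S = q -` ball z r"
  have qe: "q = (\<lambda>l. z + (Re l *\<^sub>R v + Im l *\<^sub>R cscale \<i> v))"
    unfolding q_def by (subst cscale_decomp) simp
  have cq: "continuous_on UNIV q" unfolding qe by (intro continuous_intros)
  have dq: "(q has_derivative (\<lambda>w. cscale w v)) (at l)" for l
  proof -
    have "(q has_derivative (\<lambda>w. Re w *\<^sub>R v + Im w *\<^sub>R cscale \<i> v)) (at l)"
      unfolding qe by (auto intro!: derivative_eq_intros)
    thus ?thesis by (subst (asm) cscale_decomp[symmetric])
  qed
  have So: "open S" unfolding S_def by (rule open_vimage[OF open_ball cq])
  have cb: "cball 0 1 \<subseteq> S"
  proof
    fix l :: complex assume "l \<in> cball 0 1"
    hence "cmod l \<le> 1" by simp
    hence "cmod l * norm v \<le> norm v" by (simp add: mult_left_le_one_le)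
    thus "l \<in> S" using v by (simp add: S_def q_def dist_norm norm_cscale)
  qed
  define f where "f l = h (q l)" for l
  have fhol: "f holomorphic_on S"
    unfolding holomorphic_on_def
  proof
    fix l assume "l \<in> S"
    hence "q l \<in> ball z r" by (simp add: S_def)
    then obtain L where L: "(h has_derivative L) (at (q l))" "\<And>c w. L (cscale c w) = c * L w"
      using hol unfolding holomorphic_n_def by blast
    have "((h \<circ> q) has_derivative (L \<circ> (\<lambda>w. cscale w v))) (at l)"
      by (rule diff_chain_at[OF dq L(1)])
    hence "(f has_derivative (\<lambda>w. L v * w)) (at l)"
      by (simp add: o_def L(2) f_def[abs_def] mult.commute)
    hence "(f has_field_derivative L v) (at l)" by (simp add: has_field_derivative_def)
    thus "f field_differentiable at l within S"
      using field_differentiable_at_within field_differentiable_def by blast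
  qed
  define s where "s l = -2 * \<phi> (q l) + K * (cmod l)\<^sup>2" for l
  note Cs = C2p_lin[OF C2p_line[OF Df D2f cD, where S=S and z=z and v=v] C2p_normsq So, of "-2" K]
  note CE = C2p_exp[OF Cs So]
  note CN = C2p_holo[OF fhol So]
  note CG = C2p_mult[OF CN CE So]
  have Kpos: "0 \<le> K" by (simp add: K_def)
  have lapG: "0 \<le> (-2 * blinfun_apply (blinfun_apply (D2f (z + cscale p v)) v) v + K * 2)
     + (-2 * blinfun_apply (blinfun_apply (D2f (z + cscale p v)) (cscale \<i> v)) (cscale \<i> v) + K * 2)"
    if p: "p \<in> S" for p
  proof -
    define M where "M = D2f (z + cscale p v)"
    have pin: "z + cscale p v \<in> ball z r" using p by (simp add: S_def q_def)
    have d2M: "d2 \<phi> (z + cscale p v) a b = blinfun_apply (blinfun_apply M b) a" for a b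
      unfolding M_def by (rule d2_eq[OF Df D2f])
    have Qb: "blinfun_apply (blinfun_apply M v) v + blinfun_apply (blinfun_apply M (cscale \<i> v)) (cscale \<i> v)
       \<le> 2 * K * ((norm v)\<^sup>2 * laplacian \<phi> (z + cscale p v))"
      using Q_bound[OF psh d2M, of v] by (simp add: K_def mult_ac)
    have lb: "laplacian \<phi> (z + cscale p v) \<le> 1 / r\<^sup>2" by (rule lap_bound[OF C r pin])
    have "(norm v)\<^sup>2 * laplacian \<phi> (z + cscale p v) \<le> 1"
    proof (cases "laplacian \<phi> (z + cscale p v) \<le> 0")
      case True thus ?thesis by (simp add: mult_nonneg_nonpos order_trans[OF _ zero_le_one])
    next
      case False
      have "(norm v)\<^sup>2 * laplacian \<phi> (z + cscale p v) \<le> r\<^sup>2 * (1 / r\<^sup>2)"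
        using False lb v by (intro mult_mono power_mono) auto
      thus ?thesis using r by simp
    qed
    hence "blinfun_apply (blinfun_apply M v) v + blinfun_apply (blinfun_apply M (cscale \<i> v)) (cscale \<i> v) \<le> 2 * K"
      using Qb Kpos by (smt (verit) mult_left_le)
    thus ?thesis by (simp add: M_def)
  qed
  have "2*pi * ((cmod (f 0))\<^sup>2 * exp (-2 * \<phi> (z + cscale 0 v) + K * (cmod 0)\<^sup>2)) \<le>
        integral {0..2*pi} (\<lambda>\<theta>. (cmod (f (cis \<theta>)))\<^sup>2 * exp (-2 * \<phi> (z + cscale (cis \<theta>) v) + K * (cmod (cis \<theta>))\<^sup>2))"
    apply (rule MV[OF CG So cb], rule lap_pos_alg)
      apply simp
     apply (drule lapG) apply linarith
    apply (simp add: cmod_power2)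
    done
  also have "\<dots> = integral {0..2*pi} (\<lambda>\<theta>. exp K * ((cmod (h (z + cscale (cis \<theta>) v)))\<^sup>2 * exp (- 2 * \<phi> (z + cscale (cis \<theta>) v))))"
    by (intro integral_cong) (simp add: f_def q_def mult_exp_exp algebra_simps)
  also have "\<dots> = exp K * integral {0..2*pi} (\<lambda>\<theta>. (cmod (h (z + cscale (cis \<theta>) v)))\<^sup>2 * exp (- 2 * \<phi> (z + cscale (cis \<theta>) v)))"
    by simp
  finally show ?thesis by (simp add: f_def q_def)
qed


lemma iso_basis:
  fixes \<beta> :: "'a::euclidean_space \<Rightarrow> 'b::euclidean_space"
  assumes bij: "bij_betw \<beta> Basis Basis"
  assumes \<iota>_def: "\<And>x. \<iota> x = (\<Sum>b\<in>Basis. (x \<bullet> b) *\<^sub>R \<beta> b)"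
  shows "\<And>x b. b \<in> Basis \<Longrightarrow> \<iota> x \<bullet> \<beta> b = x \<bullet> b"
    and "linear \<iota>"
    and "\<And>x y. \<iota> x \<bullet> \<iota> y = x \<bullet> y"
    and "distr lborel borel \<iota> = lborel"
proof -
  have inj: "inj_on \<beta> Basis" and im: "\<beta> ` Basis = Basis" using bij by (auto simp: bij_betw_def)
  have bb: "\<beta> b' \<bullet> \<beta> b = (if b' = b then 1 else 0)" if "b \<in> Basis" "b' \<in> Basis" for b b'
  proof -
    have "\<beta> b \<in> Basis" "\<beta> b' \<in> Basis" using that im by auto
    thus ?thesis using inj that by (simp add: inner_Basis inj_on_eq_iff)
  qed
  show co: "\<iota> x \<bullet> \<beta> b = x \<bullet> b" if "b \<in> Basis" for x b
    unfolding \<iota>_def[of x] inner_sum_left using that by (simp add: bb if_distrib cong: if_cong)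
  show lin: "linear \<iota>" unfolding \<iota>_def[abs_def]
    by (simp add: linear_iff inner_add_left scaleR_add_left sum.distrib inner_scaleR_left scaleR_sum_right)
  have \<iota>x: "\<iota> x = (\<Sum>b\<in>Basis. (x \<bullet> b) *\<^sub>R \<beta> b)" for x by (rule \<iota>_def)
  show "\<iota> x \<bullet> \<iota> y = x \<bullet> y" for x y
  proof -
    have "\<iota> x \<bullet> \<iota> y = (\<Sum>b\<in>Basis. (x \<bullet> b) * (\<iota> y \<bullet> \<beta> b))"
      by (subst (1) \<iota>x) (simp add: inner_sum_left inner_commute[of "\<iota> y"])
    also have "\<dots> = (\<Sum>b\<in>Basis. (x \<bullet> b) * (y \<bullet> b))" by (intro sum.cong refl) (simp add: co)
    also have "\<dots> = x \<bullet> y" by (rule euclidean_inner[symmetric])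
    finally show ?thesis .
  qed
  define \<kappa> where "\<kappa> y = (\<Sum>b\<in>Basis. (y \<bullet> \<beta> b) *\<^sub>R b)" for y :: 'b
  have \<kappa>b: "\<kappa> y \<bullet> b = y \<bullet> \<beta> b" if "b \<in> Basis" for y b
    unfolding \<kappa>_def inner_sum_left using that by (simp add: inner_Basis if_distrib cong: if_cong)
  have meas: "\<iota> \<in> borel_measurable lborel"
    unfolding measurable_lborel2 by (intro borel_measurable_continuous_onI linear_continuous_on linear_conv_bounded_linear[THEN iffD1, OF lin])
  have pre: "\<iota> -` box l u = box (\<kappa> l) (\<kappa> u)" for l u
  proof -
    have "x \<in> \<iota> -` box l u \<longleftrightarrow> (\<forall>b\<in>Basis. l \<bullet> \<beta> b < x \<bullet> b \<and> x \<bullet> b < u \<bullet> \<beta> b)" for x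
    proof -
      have "x \<in> \<iota> -` box l u \<longleftrightarrow> (\<forall>b'\<in>Basis. l \<bullet> b' < \<iota> x \<bullet> b' \<and> \<iota> x \<bullet> b' < u \<bullet> b')"
        by (simp add: mem_box)
      also have "\<dots> \<longleftrightarrow> (\<forall>b\<in>Basis. l \<bullet> \<beta> b < \<iota> x \<bullet> \<beta> b \<and> \<iota> x \<bullet> \<beta> b < u \<bullet> \<beta> b)"
        using ball_simps(9)[of \<beta> Basis "\<lambda>b'. l \<bullet> b' < \<iota> x \<bullet> b' \<and> \<iota> x \<bullet> b' < u \<bullet> b'"] im by simp
      finally show ?thesis by (simp add: co)
    qed
    thus ?thesis by (auto simp: mem_box \<kappa>b)
  qed
  show "distr lborel borel \<iota> = lborel"
  proof (rule lborel_eqI[symmetric])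
    fix l u :: 'b assume le: "\<And>b. b \<in> Basis \<Longrightarrow> l \<bullet> b \<le> u \<bullet> b"
    have "emeasure (distr lborel borel \<iota>) (box l u) = emeasure lborel (\<iota> -` box l u)"
      by (subst emeasure_distr[OF meas]) auto
    also have "\<dots> = emeasure lborel (box (\<kappa> l) (\<kappa> u))" by (simp add: pre)
    also have "\<dots> = (\<Prod>b\<in>Basis. (\<kappa> u - \<kappa> l) \<bullet> b)"
      using le im by (subst emeasure_lborel_box_eq) (auto simp: \<kappa>b inner_diff_left)
    also have "\<dots> = (\<Prod>b\<in>Basis. (u - l) \<bullet> \<beta> b)"
      by (intro arg_cong[where f=ennreal] prod.cong refl) (simp add: inner_diff_left \<kappa>b)
    also have "\<dots> = (\<Prod>b'\<in>Basis. (u - l) \<bullet> b')"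
      using prod.reindex_bij_betw[OF bij, of "\<lambda>b'. (u - l) \<bullet> b'"] by simp
    finally show "emeasure (distr lborel borel \<iota>) (box l u) = (\<Prod>b\<in>Basis. (u - l) \<bullet> b)" .
  qed simp
qed


lemma orth_lborel:
  fixes T :: "real^'m::{finite,wellorder} \<Rightarrow> real^'m::{finite,wellorder}"
  assumes T: "orthogonal_transformation T"
  shows "distr lborel borel T = lborel"
proof (rule lborel_eqI[symmetric])
  have lin: "linear T" using T by (rule orthogonal_transformation_linear)
  have cT: "continuous_on UNIV T"
    by (intro linear_continuous_on linear_conv_bounded_linear[THEN iffD1, OF lin])
  have meas: "T \<in> borel_measurable lborel"
    unfolding measurable_lborel2 by (intro borel_measurable_continuous_onI cT)
  have bij: "bij T" using T by (rule orthogonal_transformation_bij)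
  have Ti: "orthogonal_transformation (inv T)" using T by (rule orthogonal_transformation_inv)
  fix l u :: "real^'m::{finite,wellorder}" assume le: "\<And>b. b \<in> Basis \<Longrightarrow> l \<bullet> b \<le> u \<bullet> b"
  define A where "A = T -` box l u"
  have AI: "A = inv T ` box l u"
    unfolding A_def using bij by (simp add: bij_vimage_eq_inv_image)
  have Ab: "A \<in> sets borel" unfolding A_def
    by (intro borel_open open_vimage[OF open_box cT])
  have Abd: "bounded A" unfolding AI
    by (intro bounded_linear_image bounded_box linear_conv_bounded_linear[THEN iffD1]
        orthogonal_transformation_linear Ti)
  have "emeasure (distr lborel borel T) (box l u) = emeasure lborel A"
    unfolding A_def by (subst emeasure_distr[OF meas]) auto
  also have "\<dots> = ennreal (measure lborel A)"
    using emeasure_bounded_finite[OF Abd] by (simp add: emeasure_eq_ennreal_measure)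
  also have "measure lborel A = measure lebesgue A" using Ab by simp
  also have "\<dots> = measure lebesgue (box l u)"
    unfolding AI by (rule measure_orthogonal_image[OF Ti lmeasurable_box])
  also have "\<dots> = measure lborel (box l u)" by simp
  also have "ennreal \<dots> = emeasure lborel (box l u)"
    using emeasure_lborel_box_finite[of l u] by (simp add: emeasure_eq_ennreal_measure)
  also have "\<dots> = (\<Prod>b\<in>Basis. (u - l) \<bullet> b)"
    using le by (simp add: emeasure_lborel_box_eq)
  finally show "emeasure (distr lborel borel T) (box l u) = (\<Prod>b\<in>Basis. (u - l) \<bullet> b)" .
qed simp


lemma cscale_orth:
  assumes "cmod u = 1"
  shows "linear (cscale u :: complex^'n::finite \<Rightarrow> _)" "\<And>x y. cscale u x \<bullet> cscale u y = x \<bullet> y"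
  using assms by (auto simp: linear_iff cscale_add cscale_scaleR inner_cscale)

lemma rot_invariant:
  fixes F :: "complex^'n::finite \<Rightarrow> ennreal" and u :: complex
  assumes F: "F \<in> borel_measurable borel" and u: "cmod u = 1"
  shows "(\<integral>\<^sup>+x. F (cscale u x) \<partial>lborel) = (\<integral>\<^sup>+x. F x \<partial>lborel)"
proof -
  have card: "card (Basis::(complex^'n) set) = card (Basis::(real^('n bit0)) set)"
    by (simp add: DIM_cart card_bit0)
  obtain \<beta> where \<beta>: "bij_betw \<beta> (Basis::(complex^'n) set) (Basis::(real^('n bit0)) set)"
    using finite_same_card_bij[OF finite_Basis finite_Basis card] by blast
  define \<beta>' where "\<beta>' = inv_into Basis \<beta>"
  have \<beta>': "bij_betw \<beta>' (Basis::(real^('n bit0)) set) (Basis::(complex^'n) set)"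
    unfolding \<beta>'_def by (rule bij_betw_inv_into[OF \<beta>])
  have \<beta>\<beta>: "\<beta>' (\<beta> b) = b" if "b \<in> Basis" for b
    unfolding \<beta>'_def using \<beta> that by (simp add: bij_betw_inv_into_left)
  have \<beta>\<beta>2: "\<beta> (\<beta>' b) = b" if "b \<in> Basis" for b
    unfolding \<beta>'_def using \<beta> that by (simp add: bij_betw_inv_into_right)
  define \<iota> where "\<iota> x = (\<Sum>b\<in>Basis. (x \<bullet> b) *\<^sub>R \<beta> b)" for x :: "complex^'n"
  define \<kappa> where "\<kappa> x = (\<Sum>b\<in>Basis. (x \<bullet> b) *\<^sub>R \<beta>' b)" for x :: "real^('n bit0)"
  note I = iso_basis[OF \<beta> \<iota>_def]
  note K = iso_basis[OF \<beta>' \<kappa>_def]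
  have \<beta>B: "\<beta> b \<in> Basis" if "b \<in> Basis" for b using \<beta> that by (auto simp: bij_betw_def)
  have \<beta>'B: "\<beta>' b \<in> Basis" if "b \<in> Basis" for b using \<beta>' that by (auto simp: bij_betw_def)
  have \<kappa>\<iota>: "\<kappa> (\<iota> x) = x" for x
  proof (rule euclidean_eqI)
    fix b :: "complex^'n" assume b: "b \<in> Basis"
    have "\<kappa> (\<iota> x) \<bullet> b = \<kappa> (\<iota> x) \<bullet> \<beta>' (\<beta> b)" using \<beta>\<beta>[OF b] by simp
    also have "\<dots> = \<iota> x \<bullet> \<beta> b" by (rule K(1)[OF \<beta>B[OF b]])
    also have "\<dots> = x \<bullet> b" by (rule I(1)[OF b])
    finally show "\<kappa> (\<iota> x) \<bullet> b = x \<bullet> b" .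
  qed
  have \<iota>\<kappa>: "\<iota> (\<kappa> y) = y" for y
  proof (rule euclidean_eqI)
    fix b :: "real^('n bit0)" assume b: "b \<in> Basis"
    have "\<iota> (\<kappa> y) \<bullet> b = \<iota> (\<kappa> y) \<bullet> \<beta> (\<beta>' b)" using \<beta>\<beta>2[OF b] by simp
    also have "\<dots> = \<kappa> y \<bullet> \<beta>' b" by (rule I(1)[OF \<beta>'B[OF b]])
    also have "\<dots> = y \<bullet> b" by (rule K(1)[OF b])
    finally show "\<iota> (\<kappa> y) \<bullet> b = y \<bullet> b" .
  qed
  define R where "R = (cscale u :: complex^'n \<Rightarrow> _)"
  note Ro = cscale_orth[OF u, folded R_def]
  define T where "T = (\<lambda>y. \<iota> (R (\<kappa> y)))"
  have T: "orthogonal_transformation T"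
    unfolding orthogonal_transformation_def T_def
  proof (intro conjI allI)
    show "linear (\<lambda>y. \<iota> (R (\<kappa> y)))"
      using linear_compose[OF linear_compose[OF K(2) Ro(1)] I(2)] by (simp add: o_def R_def)
    show "\<iota> (R (\<kappa> v)) \<bullet> \<iota> (R (\<kappa> w)) = v \<bullet> w" for v w
      using Ro(2) by (simp add: I(3) K(3) R_def inner_cscale u)
  qed
  have mK: "\<kappa> \<in> measurable lborel borel"
    unfolding measurable_lborel2
    by (intro borel_measurable_continuous_onI linear_continuous_on linear_conv_bounded_linear[THEN iffD1, OF K(2)])
  have mR: "R \<in> borel_measurable borel" unfolding R_def
    by (intro borel_measurable_continuous_onI linear_continuous_on linear_conv_bounded_linear[THEN iffD1, OF cscale_orth(1)[OF u]])
  have mT: "T \<in> measurable lborel borel"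
    unfolding measurable_lborel2 T_def
    by (intro borel_measurable_continuous_onI linear_continuous_on linear_conv_bounded_linear[THEN iffD1]
        orthogonal_transformation_linear T[unfolded T_def])
  have FR: "(\<lambda>x. F (R x)) \<in> borel_measurable borel" using F mR by measurable
  have FK: "(\<lambda>x. F (\<kappa> x)) \<in> borel_measurable borel" using F mK[unfolded measurable_lborel2] by measurable
  have "(\<integral>\<^sup>+x. F (R x) \<partial>lborel) = (\<integral>\<^sup>+x. F (R x) \<partial>(distr lborel borel \<kappa>))" by (simp add: K(4))
  also have "\<dots> = (\<integral>\<^sup>+y. F (R (\<kappa> y)) \<partial>lborel)" by (rule nn_integral_distr[OF mK]) (simp add: measurable_distr_eq1 FR)
  also have "\<dots> = (\<integral>\<^sup>+y. F (\<kappa> (T y)) \<partial>lborel)" by (simp add: T_def \<kappa>\<iota>)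
  also have "\<dots> = (\<integral>\<^sup>+y. F (\<kappa> y) \<partial>(distr lborel borel T))" by (rule nn_integral_distr[OF mT, symmetric]) (simp add: measurable_distr_eq1 FK)
  also have "\<dots> = (\<integral>\<^sup>+y. F (\<kappa> y) \<partial>lborel)" by (simp add: orth_lborel[OF T])
  also have "\<dots> = (\<integral>\<^sup>+x. F x \<partial>(distr lborel borel \<kappa>))" by (rule nn_integral_distr[OF mK, symmetric]) (simp add: measurable_distr_eq1 F)
  also have "\<dots> = (\<integral>\<^sup>+x. F x \<partial>lborel)" by (simp add: K(4))
  finally show ?thesis by (simp add: R_def)
qed


lemma transl_nn:
  fixes H :: "complex^'n::finite \<Rightarrow> ennreal"
  assumes "H \<in> borel_measurable borel"
  shows "(\<integral>\<^sup>+w. H w \<partial>lborel) = (\<integral>\<^sup>+y. H (z + y) \<partial>lborel)"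
proof -
  have m: "((+) z) \<in> measurable lborel borel" by (simp add: measurable_lborel2)
  have "(\<integral>\<^sup>+w. H w \<partial>lborel) = (\<integral>\<^sup>+w. H w \<partial>(distr lborel borel ((+) z)))"
    by (simp add: lborel_distr_plus)
  also have "\<dots> = (\<integral>\<^sup>+y. H (z + y) \<partial>lborel)"
    by (rule nn_integral_distr[OF m]) (simp add: measurable_distr_eq1 assms)
  finally show ?thesis .
qed

lemma rot_nn:
  fixes F :: "complex^'n::finite \<Rightarrow> ennreal"
  assumes F: "F \<in> borel_measurable borel" and u: "cmod u = 1"
  shows "(\<integral>\<^sup>+w. F (z + cscale u (w - z)) \<partial>lborel) = (\<integral>\<^sup>+w. F w \<partial>lborel)"
proof -
  have lin: "bounded_linear (cscale u :: complex^'n \<Rightarrow> _)"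
    using cscale_orth(1)[OF u] linear_conv_bounded_linear by blast
  have mc: "(cscale u :: complex^'n \<Rightarrow> _) \<in> borel_measurable borel"
    by (intro borel_measurable_continuous_onI linear_continuous_on lin)
  have m1: "(\<lambda>w. F (z + cscale u (w - z))) \<in> borel_measurable borel"
    using F mc by measurable
  have m2: "(\<lambda>y. F (z + y)) \<in> borel_measurable borel" using F by measurable
  have "(\<integral>\<^sup>+w. F (z + cscale u (w - z)) \<partial>lborel) = (\<integral>\<^sup>+y. F (z + cscale u (z + y - z)) \<partial>lborel)"
    by (rule transl_nn[OF m1])
  also have "\<dots> = (\<integral>\<^sup>+y. (\<lambda>y. F (z + y)) (cscale u y) \<partial>lborel)" by simp
  also have "\<dots> = (\<integral>\<^sup>+y. F (z + y) \<partial>lborel)" by (rule rot_invariant[OF m2 u])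
  also have "\<dots> = (\<integral>\<^sup>+w. F w \<partial>lborel)" by (rule transl_nn[OF F, symmetric])
  finally show ?thesis .
qed

theorem mainTheorem14:
  fixes \<phi> :: "complex ^ 'n :: finite \<Rightarrow> real"
  assumes "admissible \<phi>"
  shows "\<exists>C::real. \<forall>z r (h :: complex ^ 'n \<Rightarrow> complex).
           0 < r \<longrightarrow> r \<le> rho \<phi> z \<longrightarrow> holomorphic_n h (ball z r) \<longrightarrow>
           ennreal ((cmod (h z))\<^sup>2 * exp (- 2 * \<phi> z))
             \<le> ennreal (C / measure lborel (ball z r)) *
               (\<integral>\<^sup>+ w \<in> ball z r. ennreal ((cmod (h w))\<^sup>2 * exp (- 2 * \<phi> w)) \<partial>lborel)"
proof -
  have C: "C2 \<phi>" and psh: "plurisubharmonic \<phi>" using assms by (auto simp: admissible_def)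
  define K where "K = (real DIM(complex^'n))\<^sup>2"
  show ?thesis
  proof (intro exI allI impI)
    fix z r and h :: "complex^'n \<Rightarrow> complex"
    assume r: "0 < r" "r \<le> rho \<phi> z" and hol: "holomorphic_n h (ball z r)"
    define B where "B = ball z r"
    define g where "g w = (cmod (h w))\<^sup>2 * exp (- 2 * \<phi> w)" for w
    have g0: "0 \<le> g w" for w by (simp add: g_def)
    obtain Df where Df: "\<And>x. (\<phi> has_derivative blinfun_apply (Df x)) (at x)"
      using C unfolding C2_def by blast
    have cphi: "continuous_on UNIV \<phi>"
      by (meson Df continuous_at_imp_continuous_on has_derivative_continuous)
    have ch: "continuous_on B h"
      using hol unfolding holomorphic_n_def B_def
      by (meson continuous_at_imp_continuous_on has_derivative_continuous)
    have cg: "continuous_on B g" unfolding g_def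
      by (intro continuous_intros ch continuous_on_subset[OF cphi]) auto
    define Fm where "Fm w = ennreal (g w) * indicator B w" for w
    have mf: "(\<lambda>w. indicator B w *\<^sub>R g w) \<in> borel_measurable borel"
      by (rule borel_measurable_continuous_on_indicator) (use cg in \<open>auto simp: B_def\<close>)
    have Fm_eq: "Fm = (\<lambda>w. ennreal (indicator B w *\<^sub>R g w))"
      by (auto simp: Fm_def indicator_def fun_eq_iff)
    have mFm: "Fm \<in> borel_measurable borel" unfolding Fm_eq using mf by measurable
    define R where "R \<theta> w = z + cscale (cis \<theta>) (w - z)" for \<theta> w
    have RB: "R \<theta> w \<in> B \<longleftrightarrow> w \<in> B" for \<theta> w
      by (simp add: R_def B_def dist_norm norm_cscale norm_minus_commute)
    have lin_i: "bounded_linear (cscale \<i> :: complex^'n \<Rightarrow> _)"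
      by (rule linear_conv_bounded_linear[THEN iffD1, OF cscale_orth(1)]) simp
    have lin_i2: "linear (cscale \<i> :: complex^'n \<Rightarrow> _)" by (rule cscale_orth(1)) simp
    have Re: "R \<theta> w = z + (cos \<theta> *\<^sub>R (w - z) + sin \<theta> *\<^sub>R cscale \<i> (w - z))" for \<theta> w
      unfolding R_def by (subst cscale_decomp) simp
    have pw: "ennreal (2*pi*g z) * indicator B w
       \<le> ennreal (exp K) * (\<integral>\<^sup>+\<theta>. Fm (R \<theta> w) * indicator {0..2*pi} \<theta> \<partial>lborel)" for w
    proof (cases "w \<in> B")
      case False thus ?thesis by simp
    next
      case True
      have nv: "norm (w - z) < r" using True by (simp add: B_def dist_norm norm_minus_commute)
      have ci: "2*pi * g z \<le> exp K * integral {0..2*pi} (\<lambda>\<theta>. g (R \<theta> w))"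
        using circle_ineq[OF C psh r hol nv] by (simp add: g_def R_def K_def)
      have cq: "continuous_on {0..2*pi} (\<lambda>\<theta>. g (R \<theta> w))"
      proof (rule continuous_on_compose2[OF cg])
        show "continuous_on {0..2*pi} (\<lambda>\<theta>. R \<theta> w)" unfolding Re
          by (intro continuous_intros)
        show "(\<lambda>\<theta>. R \<theta> w) ` {0..2*pi} \<subseteq> B" using RB True by auto
      qed
      have hi: "((\<lambda>\<theta>. g (R \<theta> w)) has_integral integral {0..2*pi} (\<lambda>\<theta>. g (R \<theta> w))) {0..2*pi}"
        using integrable_continuous_interval[OF cq] by (simp add: has_integral_integral)
      have "ennreal (integral {0..2*pi} (\<lambda>\<theta>. g (R \<theta> w)))
          = (\<integral>\<^sup>+\<theta>. ennreal (g (R \<theta> w)) * indicator {0..2*pi} \<theta> \<partial>lborel)"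
        by (rule nn_integral_has_integral_lebesgue'[OF g0 hi, symmetric])
      also have "\<dots> = (\<integral>\<^sup>+\<theta>. Fm (R \<theta> w) * indicator {0..2*pi} \<theta> \<partial>lborel)"
        using RB True by (simp add: Fm_def)
      finally have e: "ennreal (integral {0..2*pi} (\<lambda>\<theta>. g (R \<theta> w))) = \<dots>" .
      have "ennreal (2*pi*g z) \<le> ennreal (exp K * integral {0..2*pi} (\<lambda>\<theta>. g (R \<theta> w)))"
        using ci by (rule ennreal_leI)
      also have "\<dots> = ennreal (exp K) * ennreal (integral {0..2*pi} (\<lambda>\<theta>. g (R \<theta> w)))"
        by (rule ennreal_mult) (auto intro: integral_nonneg[OF integrable_continuous_interval[OF cq]] g0)
      finally show ?thesis using True e by simp
    qed
    have cR: "continuous_on UNIV (\<lambda>x::(complex^'n) \<times> real. R (snd x) (fst x))"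
      unfolding Re by (intro continuous_intros linear_continuous_on_compose[OF _ lin_i2])
    have mG: "(\<lambda>(w, \<theta>). Fm (R \<theta> w) * indicator {0..2*pi} \<theta>) \<in> borel_measurable (lborel \<Otimes>\<^sub>M lborel)"
    proof -
      have mR: "(\<lambda>x::(complex^'n) \<times> real. R (snd x) (fst x)) \<in> borel_measurable borel"
        by (rule borel_measurable_continuous_onI[OF cR])
      have m1: "(\<lambda>x::(complex^'n) \<times> real. Fm (R (snd x) (fst x))) \<in> borel_measurable borel"
        by (rule measurable_compose[OF mR mFm])
      have ms: "(snd :: (complex^'n) \<times> real \<Rightarrow> real) \<in> borel_measurable borel"
        by (intro borel_measurable_continuous_onI continuous_on_snd continuous_on_id)
      have m2: "(\<lambda>x::(complex^'n) \<times> real. indicator {0..2*pi} (snd x) :: ennreal) \<in> borel_measurable borel"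
        by (rule measurable_compose[OF ms]) simp
      have "(\<lambda>x::(complex^'n) \<times> real. Fm (R (snd x) (fst x)) * indicator {0..2*pi} (snd x)) \<in> borel_measurable borel"
        using m1 m2 by measurable
      thus ?thesis unfolding lborel_prod measurable_lborel2 by (simp add: case_prod_unfold)
    qed
    have psf: "pair_sigma_finite (lborel :: (complex^'n) measure) (lborel :: real measure)"
      by (simp add: pair_sigma_finite_def lborel.sigma_finite_measure_axioms)
    define I where "I = (\<integral>\<^sup>+w. Fm w \<partial>lborel)"
    have inner: "(\<integral>\<^sup>+w. Fm (R \<theta> w) * indicator {0..2*pi} \<theta> \<partial>lborel) = I * indicator {0..2*pi} \<theta>" for \<theta>
    proof -
      have "(\<integral>\<^sup>+w. Fm (R \<theta> w) * indicator {0..2*pi} \<theta> \<partial>lborel) = (\<integral>\<^sup>+w. Fm (R \<theta> w) \<partial>lborel) * indicator {0..2*pi} \<theta>"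
      proof (rule nn_integral_multc)
        have "continuous_on UNIV (R \<theta>)" unfolding Re[abs_def]
          by (intro continuous_intros linear_continuous_on_compose[OF _ lin_i2])
        hence "R \<theta> \<in> borel_measurable borel" by (rule borel_measurable_continuous_onI)
        thus "(\<lambda>x. Fm (R \<theta> x)) \<in> borel_measurable lborel"
          unfolding measurable_lborel2 by (rule measurable_compose[OF _ mFm])
      qed
      also have "(\<integral>\<^sup>+w. Fm (R \<theta> w) \<partial>lborel) = I"
        unfolding R_def I_def by (rule rot_nn[OF mFm]) simp
      finally show ?thesis .
    qed
    have mB: "B \<in> sets lborel" by (simp add: B_def)
    have "ennreal (2*pi*g z) * emeasure lborel B = (\<integral>\<^sup>+w. ennreal (2*pi*g z) * indicator B w \<partial>lborel)"
      by (rule nn_integral_cmult_indicator[OF mB, symmetric])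
    also have "\<dots> \<le> (\<integral>\<^sup>+w. ennreal (exp K) * (\<integral>\<^sup>+\<theta>. Fm (R \<theta> w) * indicator {0..2*pi} \<theta> \<partial>lborel) \<partial>lborel)"
      by (rule nn_integral_mono) (rule pw)
    also have "\<dots> = ennreal (exp K) * (\<integral>\<^sup>+w. (\<integral>\<^sup>+\<theta>. Fm (R \<theta> w) * indicator {0..2*pi} \<theta> \<partial>lborel) \<partial>lborel)"
      by (rule nn_integral_cmult) (rule lborel.borel_measurable_nn_integral[OF mG])
    also have "(\<integral>\<^sup>+w. (\<integral>\<^sup>+\<theta>. Fm (R \<theta> w) * indicator {0..2*pi} \<theta> \<partial>lborel) \<partial>lborel)
        = (\<integral>\<^sup>+\<theta>. (\<integral>\<^sup>+w. Fm (R \<theta> w) * indicator {0..2*pi} \<theta> \<partial>lborel) \<partial>lborel)"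
      by (rule pair_sigma_finite.Fubini'[OF psf mG, symmetric])
    also have "\<dots> = (\<integral>\<^sup>+\<theta>. I * indicator {0..2*pi} \<theta> \<partial>lborel)" by (simp add: inner)
    also have "\<dots> = I * ennreal (2*pi)"
      by (simp add: nn_integral_cmult_indicator mult.commute)
    finally have main: "ennreal (2*pi*g z) * emeasure lborel B \<le> ennreal (exp K) * (I * ennreal (2*pi))" .
    define m where "m = measure lborel B"
    have m0: "0 < m" unfolding m_def B_def using content_ball_pos[OF r(1)] by simp
    have em: "emeasure lborel B = ennreal m"
      unfolding m_def B_def
      by (rule emeasure_eq_ennreal_measure) (use emeasure_lborel_ball_finite[of z r] in auto)
    define c where "c = ennreal (1 / (2*pi*m))"
    have lhs: "c * (ennreal (2*pi*g z) * ennreal m) = ennreal (g z)"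
      unfolding c_def using m0 g0[of z]
      by (simp add: ennreal_mult[symmetric] field_simps)
    have rhs: "c * (ennreal (exp K) * (I * ennreal (2*pi))) = ennreal (exp K / m) * I"
    proof -
      have "c * (ennreal (exp K) * (I * ennreal (2*pi))) = (c * ennreal (exp K) * ennreal (2*pi)) * I"
        by (simp add: mult_ac)
      also have "c * ennreal (exp K) * ennreal (2*pi) = ennreal (exp K / m)"
        unfolding c_def using m0 by (simp add: ennreal_mult[symmetric] field_simps)
      finally show ?thesis .
    qed
    have "ennreal (g z) \<le> ennreal (exp K / m) * I"
      using mult_left_mono[OF main[unfolded em], of c] lhs rhs by simp
    thus "ennreal ((cmod (h z))\<^sup>2 * exp (- 2 * \<phi> z))
             \<le> ennreal (exp K / measure lborel (ball z r)) *
               (\<integral>\<^sup>+ w \<in> ball z r. ennreal ((cmod (h w))\<^sup>2 * exp (- 2 * \<phi> w)) \<partial>lborel)"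
      by (simp add: g_def m_def B_def I_def Fm_def)
  qed
qed


end
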